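(* Let $\mathcal F$ be a finite family of closed axis-parallel rectangles all of whose side-lengths are rational. Then there is an $\mathcal F$-piercing lattice of minimum density among all $\mathcal F$-piercing lattices that has a vector basis with rational coordinates.
   Context: A point set is $\mathcal F$-piercing if every translate of every rectangle in $\mathcal F$ contains one of its points. A lattice $\{iu+jv:i,j\in\mathbb Z\}$ with $u,v$ linearly independent has density $1/|\det[u,v]|$. *)

theory Defs
  imports "HOL-Analysis.Analysis"
begin

type_synonym pt = "real \<times> real"

definition lattice :: "pt \<Rightarrow> pt \<Rightarrow> pt set" where
  "lattice u v = {of_int i *\<^sub>R u + of_int j *\<^sub>R v | i j. True}"

definition det2 :: "pt \<Rightarrow> pt \<Rightarrow> real" where
  "det2 u v = fst u * snd v - snd u * fst v"

definition lin_indep2 :: "pt \<Rightarrow> pt \<Rightarrow> bool" where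
  "lin_indep2 u v \<longleftrightarrow> det2 u v \<noteq> 0"

definition lattice_density :: "pt \<Rightarrow> pt \<Rightarrow> real" where
  "lattice_density u v = 1 / \<bar>det2 u v\<bar>"

definition rational_rectangle :: "pt set \<Rightarrow> bool" where
  "rational_rectangle R \<longleftrightarrow> (\<exists>p q. R = cbox p q \<and> fst p < fst q \<and> snd p < snd q
       \<and> fst q - fst p \<in> \<rat> \<and> snd q - snd p \<in> \<rat>)"

definition piercing :: "pt set set \<Rightarrow> pt set \<Rightarrow> bool" where
  "piercing F P \<longleftrightarrow> (\<forall>R\<in>F. \<forall>t. \<exists>z\<in>P. z \<in> (\<lambda>x. t + x) ` R)"

end

theory Submission
  imports Defs
begin


definition lp :: "pt \<times> pt \<Rightarrow> int \<times> int \<Rightarrow> pt" where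
  "lp z n = of_int (fst n) *\<^sub>R fst z + of_int (snd n) *\<^sub>R snd z"

abbreviation LL :: "pt \<times> pt \<Rightarrow> pt set" where "LL z \<equiv> lattice (fst z) (snd z)"

definition dz :: "pt \<times> pt \<Rightarrow> real" where "dz z = det2 (fst z) (snd z)"

definition pbox :: "real \<Rightarrow> real \<Rightarrow> pt set \<Rightarrow> bool" where
  "pbox a b P \<longleftrightarrow> (\<forall>c1 c2. \<exists>y\<in>P. c1 \<le> fst y \<and> fst y \<le> c1 + a \<and> c2 \<le> snd y \<and> snd y \<le> c2 + b)"

lemma LL_iff: "y \<in> LL z \<longleftrightarrow> (\<exists>n. y = lp z n)"
  unfolding lattice_def lp_def by force

lemma lp_in: "lp z n \<in> LL z" using LL_iff by blast

lemma lp_add: "lp z n + lp z m = lp z (fst n + fst m, snd n + snd m)"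
  unfolding lp_def by (simp add: algebra_simps scaleR_add_left)

lemma lp_diff: "lp z n - lp z m = lp z (fst n - fst m, snd n - snd m)"
  unfolding lp_def by (simp add: algebra_simps scaleR_diff_left)

lemma LL_add: "x \<in> LL z \<Longrightarrow> y \<in> LL z \<Longrightarrow> x + y \<in> LL z"
  using lp_add LL_iff by metis

lemma LL_diff: "x \<in> LL z \<Longrightarrow> y \<in> LL z \<Longrightarrow> x - y \<in> LL z"
  using lp_diff LL_iff by metis

lemma lp_fst: "fst (lp z n) = of_int (fst n) * fst (fst z) + of_int (snd n) * fst (snd z)"
  by (simp add: lp_def)
lemma lp_snd: "snd (lp z n) = of_int (fst n) * snd (fst z) + of_int (snd n) * snd (snd z)"
  by (simp add: lp_def)

lemma norm_pair_le: "norm (x::real, y::real) \<le> \<bar>x\<bar> + \<bar>y\<bar>"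
proof -
  have "norm (x, y) = norm ((x,0) + (0,y))" by simp
  also have "\<dots> \<le> norm (x,0::real) + norm (0::real,y)" by (rule norm_triangle_ineq)
  finally show ?thesis by (simp add: norm_Pair)
qed

lemma abs_fst_le: "\<bar>fst (p::pt)\<bar> \<le> norm p"
  by (cases p) (simp add: norm_Pair real_sqrt_ge_abs1)
lemma abs_snd_le: "\<bar>snd (p::pt)\<bar> \<le> norm p"
  by (cases p) (simp add: norm_Pair real_sqrt_ge_abs2)

lemma norm_pt_le: "norm (p::pt) \<le> \<bar>fst p\<bar> + \<bar>snd p\<bar>"
  by (cases p) (simp add: norm_pair_le)

lemma det2_le: "\<bar>det2 x y\<bar> \<le> norm x * norm y"
proof -
  obtain x1 x2 y1 y2 where x: "x = (x1,x2)" and y: "y = (y1,y2)" by (cases x, cases y)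
  have sq: "(x1*y2 - x2*y1)^2 \<le> (x1^2+x2^2)*(y1^2+y2^2)"
  proof -
    have "(x1^2+x2^2)*(y1^2+y2^2) - (x1*y2 - x2*y1)^2 = (x1*y1+x2*y2)^2"
      by (simp add: power2_eq_square algebra_simps)
    then show ?thesis by (metis diff_ge_0_iff_ge zero_le_power2)
  qed
  have "sqrt ((x1*y2 - x2*y1)^2) \<le> sqrt ((x1^2+x2^2)*(y1^2+y2^2))"
    using sq by (rule real_sqrt_le_mono)
  then have "\<bar>x1*y2 - x2*y1\<bar> \<le> sqrt ((x1^2+x2^2)*(y1^2+y2^2))" by simp
  then show ?thesis by (simp add: x y det2_def norm_Pair real_sqrt_mult)
qed

lemma coeff_fst:
  assumes "dz z \<noteq> 0"
  shows "of_int (fst n) = det2 (lp z n) (snd z) / dz z"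
  using assms unfolding dz_def det2_def lp_def
  by (simp add: field_simps)

lemma coeff_snd:
  assumes "dz z \<noteq> 0"
  shows "of_int (snd n) = det2 (fst z) (lp z n) / dz z"
  using assms unfolding dz_def det2_def lp_def
  by (simp add: field_simps)

lemma coeff_bound_fst:
  assumes "dz z \<noteq> 0"
  shows "\<bar>of_int (fst n)\<bar> \<le> norm (lp z n) * norm (snd z) / \<bar>dz z\<bar>"
proof -
  have "\<bar>of_int (fst n)\<bar> = \<bar>det2 (lp z n) (snd z)\<bar> / \<bar>dz z\<bar>"
    using coeff_fst[OF assms] by (simp add: abs_divide)
  also have "\<dots> \<le> norm (lp z n) * norm (snd z) / \<bar>dz z\<bar>"
    by (rule divide_right_mono) (auto simp: det2_le)
  finally show ?thesis .
qed

lemma coeff_bound_snd: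
  assumes "dz z \<noteq> 0"
  shows "\<bar>of_int (snd n)\<bar> \<le> norm (lp z n) * norm (fst z) / \<bar>dz z\<bar>"
proof -
  have "\<bar>of_int (snd n)\<bar> = \<bar>det2 (fst z) (lp z n)\<bar> / \<bar>dz z\<bar>"
    using coeff_snd[OF assms] by (simp add: abs_divide)
  also have "\<dots> \<le> norm (lp z n) * norm (fst z) / \<bar>dz z\<bar>"
    by (rule divide_right_mono) (auto simp: det2_le mult.commute)
  finally show ?thesis .
qed

lemma finite_int_box: "finite {n::int\<times>int. \<bar>fst n\<bar> \<le> N \<and> \<bar>snd n\<bar> \<le> N}"
proof -
  have "{n::int\<times>int. \<bar>fst n\<bar> \<le> N \<and> \<bar>snd n\<bar> \<le> N} \<subseteq> {-N..N} \<times> {-N..N}" by auto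
  then show ?thesis by (rule finite_subset) simp
qed

lemma coeff_box:
  assumes "dz z \<noteq> 0" "norm (lp z n) \<le> r"
  shows "\<bar>fst n\<bar> \<le> \<lceil>r * (norm (fst z) + norm (snd z)) / \<bar>dz z\<bar>\<rceil> \<and>
         \<bar>snd n\<bar> \<le> \<lceil>r * (norm (fst z) + norm (snd z)) / \<bar>dz z\<bar>\<rceil>"
proof -
  have d: "\<bar>dz z\<bar> > 0" using assms by simp
  have r0: "0 \<le> r" using assms(2) norm_ge_zero[of "lp z n"] by linarith
  have "norm (lp z n) * norm (snd z) / \<bar>dz z\<bar> \<le> r * (norm (fst z) + norm (snd z)) / \<bar>dz z\<bar>"
    using d assms(2) r0 by (intro divide_right_mono mult_mono) auto
  moreover have "norm (lp z n) * norm (fst z) / \<bar>dz z\<bar> \<le> r * (norm (fst z) + norm (snd z)) / \<bar>dz z\<bar>"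
    using d assms(2) r0 by (intro divide_right_mono mult_mono) auto
  ultimately have "\<bar>real_of_int (fst n)\<bar> \<le> r * (norm (fst z) + norm (snd z)) / \<bar>dz z\<bar>"
    "\<bar>real_of_int (snd n)\<bar> \<le> r * (norm (fst z) + norm (snd z)) / \<bar>dz z\<bar>"
    using coeff_bound_fst[OF assms(1), of n] coeff_bound_snd[OF assms(1), of n] by linarith+
  then show ?thesis by (simp add: ceiling_le_iff le_ceiling_iff)
qed

lemma finite_LL_ball:
  assumes "dz z \<noteq> 0"
  shows "finite (LL z \<inter> cball 0 r)"
proof -
  let ?N = "\<lceil>r * (norm (fst z) + norm (snd z)) / \<bar>dz z\<bar>\<rceil>"
  have "LL z \<inter> cball 0 r \<subseteq> lp z ` {n. \<bar>fst n\<bar> \<le> ?N \<and> \<bar>snd n\<bar> \<le> ?N}"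
  proof
    fix y assume "y \<in> LL z \<inter> cball 0 r"
    then obtain n where n: "y = lp z n" and "norm y \<le> r" using LL_iff by auto
    then show "y \<in> lp z ` {n. \<bar>fst n\<bar> \<le> ?N \<and> \<bar>snd n\<bar> \<le> ?N}"
      using coeff_box[OF assms, of n r] by auto
  qed
  then show ?thesis using finite_subset finite_int_box by blast
qed

lemma reduce_pt:
  assumes "dz z \<noteq> 0"
  shows "\<exists>p\<in>LL z. norm (c - p) \<le> norm (fst z) + norm (snd z)"
proof -
  obtain u1 u2 w1 w2 c1 c2 where zz: "z = ((u1,u2),(w1,w2))" and cc: "c = (c1,c2)"
    by (metis prod.collapse)
  have dd: "u1*w2 - u2*w1 \<noteq> 0" using assms zz by (simp add: dz_def det2_def)
  define \<alpha> where "\<alpha> = (c1*w2 - c2*w1) / (u1*w2 - u2*w1)"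
  define \<beta> where "\<beta> = (u1*c2 - u2*c1) / (u1*w2 - u2*w1)"
  have e1: "c1 = \<alpha>*u1 + \<beta>*w1"
  proof -
    have "\<alpha>*u1 + \<beta>*w1 = ((c1*w2 - c2*w1)*u1 + (u1*c2 - u2*c1)*w1) / (u1*w2 - u2*w1)"
      unfolding \<alpha>_def \<beta>_def by (simp add: add_divide_distrib)
    also have "(c1*w2 - c2*w1)*u1 + (u1*c2 - u2*c1)*w1 = c1 * (u1*w2 - u2*w1)" by algebra
    finally show ?thesis using dd by simp
  qed
  have e2: "c2 = \<alpha>*u2 + \<beta>*w2"
  proof -
    have "\<alpha>*u2 + \<beta>*w2 = ((c1*w2 - c2*w1)*u2 + (u1*c2 - u2*c1)*w2) / (u1*w2 - u2*w1)"
      unfolding \<alpha>_def \<beta>_def by (simp add: add_divide_distrib)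
    also have "(c1*w2 - c2*w1)*u2 + (u1*c2 - u2*c1)*w2 = c2 * (u1*w2 - u2*w1)" by algebra
    finally show ?thesis using dd by simp
  qed
  have c: "c = \<alpha> *\<^sub>R fst z + \<beta> *\<^sub>R snd z"
    using e1 e2 by (simp add: zz cc)
  define p where "p = lp z (\<lfloor>\<alpha>\<rfloor>, \<lfloor>\<beta>\<rfloor>)"
  have "c - p = (\<alpha> - of_int \<lfloor>\<alpha>\<rfloor>) *\<^sub>R fst z + (\<beta> - of_int \<lfloor>\<beta>\<rfloor>) *\<^sub>R snd z"
    unfolding p_def lp_def c by (simp add: algebra_simps)
  also have "norm \<dots> \<le> norm (fst z) + norm (snd z)"
  proof -
    have fa: "0 \<le> \<alpha> - of_int \<lfloor>\<alpha>\<rfloor>" "\<alpha> - of_int \<lfloor>\<alpha>\<rfloor> \<le> 1"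
      using floor_correct[of \<alpha>] unfolding of_int_add of_int_1 by linarith+
    have fb: "0 \<le> \<beta> - of_int \<lfloor>\<beta>\<rfloor>" "\<beta> - of_int \<lfloor>\<beta>\<rfloor> \<le> 1"
      using floor_correct[of \<beta>] unfolding of_int_add of_int_1 by linarith+
    have "norm ((\<alpha> - of_int \<lfloor>\<alpha>\<rfloor>) *\<^sub>R fst z) \<le> norm (fst z)"
      using fa by (simp add: mult_left_le_one_le)
    moreover have "norm ((\<beta> - of_int \<lfloor>\<beta>\<rfloor>) *\<^sub>R snd z) \<le> norm (snd z)"
      using fb by (simp add: mult_left_le_one_le)
    ultimately show ?thesis by (meson add_mono norm_triangle_le)
  qed
  finally show ?thesis using lp_in p_def by blast
qed



lemma det2_add2: "det2 u (x + y) = det2 u x + det2 u y"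
  by (simp add: det2_def algebra_simps)
lemma det2_diff2: "det2 u (x - y) = det2 u x - det2 u y"
  by (simp add: det2_def algebra_simps)
lemma det2_scale2: "det2 u (t *\<^sub>R x) = t * det2 u x"
  by (simp add: det2_def algebra_simps)
lemma det2_self: "det2 u u = 0"
  by (simp add: det2_def algebra_simps)
lemma det2_swap: "det2 u v = - det2 v u"
  by (simp add: det2_def algebra_simps)

lemma fst_in_LL: "fst z \<in> LL z"
proof -
  have "fst z = lp z (1,0)" by (simp add: lp_def)
  then show ?thesis using lp_in by metis
qed
lemma snd_in_LL: "snd z \<in> LL z"
proof -
  have "snd z = lp z (0,1)" by (simp add: lp_def)
  then show ?thesis using lp_in by metis
qed

lemma LL_int_comb:
  assumes "x \<in> LL z" "y \<in> LL z"
  shows "of_int i *\<^sub>R x + of_int j *\<^sub>R y \<in> LL z"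
proof -
  obtain n m where x: "x = lp z n" and y: "y = lp z m" using assms LL_iff by blast
  have "of_int i *\<^sub>R x + of_int j *\<^sub>R y
      = lp z (i * fst n + j * fst m, i * snd n + j * snd m)"
    unfolding x y lp_def by (simp add: algebra_simps scaleR_add_right)
  then show ?thesis using lp_in by metis
qed

lemma LL_sub:
  assumes "fst z' \<in> LL z" "snd z' \<in> LL z"
  shows "LL z' \<subseteq> LL z"
proof
  fix y assume "y \<in> LL z'"
  then obtain n where "y = lp z' n" using LL_iff by blast
  then show "y \<in> LL z" unfolding lp_def using LL_int_comb assms by blast
qed

lemma decomp:
  assumes "dz z \<noteq> 0"
  shows "c = (det2 c (snd z) / dz z) *\<^sub>R fst z + (det2 (fst z) c / dz z) *\<^sub>R snd z"
proof -
  obtain u1 u2 w1 w2 c1 c2 where zz: "z = ((u1,u2),(w1,w2))" and cc: "c = (c1,c2)"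
    by (metis prod.collapse)
  have dd: "u1*w2 - u2*w1 \<noteq> 0" using assms zz by (simp add: dz_def det2_def)
  define \<alpha> where "\<alpha> = (c1*w2 - c2*w1) / (u1*w2 - u2*w1)"
  define \<beta> where "\<beta> = (u1*c2 - u2*c1) / (u1*w2 - u2*w1)"
  have e1: "c1 = \<alpha>*u1 + \<beta>*w1"
  proof -
    have "\<alpha>*u1 + \<beta>*w1 = ((c1*w2 - c2*w1)*u1 + (u1*c2 - u2*c1)*w1) / (u1*w2 - u2*w1)"
      unfolding \<alpha>_def \<beta>_def by (simp add: add_divide_distrib)
    also have "(c1*w2 - c2*w1)*u1 + (u1*c2 - u2*c1)*w1 = c1 * (u1*w2 - u2*w1)" by algebra
    finally show ?thesis using dd by simp
  qed
  have e2: "c2 = \<alpha>*u2 + \<beta>*w2"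
  proof -
    have "\<alpha>*u2 + \<beta>*w2 = ((c1*w2 - c2*w1)*u2 + (u1*c2 - u2*c1)*w2) / (u1*w2 - u2*w1)"
      unfolding \<alpha>_def \<beta>_def by (simp add: add_divide_distrib)
    also have "(c1*w2 - c2*w1)*u2 + (u1*c2 - u2*c1)*w2 = c2 * (u1*w2 - u2*w1)" by algebra
    finally show ?thesis using dd by simp
  qed
  have ab: "\<alpha> = det2 c (snd z) / dz z" "\<beta> = det2 (fst z) c / dz z"
    unfolding \<alpha>_def \<beta>_def by (simp_all add: zz cc det2_def dz_def)
  have "c = \<alpha> *\<^sub>R fst z + \<beta> *\<^sub>R snd z"
    using e1 e2 by (simp add: zz cc)
  then show ?thesis by (simp only: ab)
qed

lemma det_inv:
  assumes "dz z \<noteq> 0" "dz z' \<noteq> 0" "LL z' = LL z"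
  shows "\<bar>dz z'\<bar> = \<bar>dz z\<bar>"
proof -
  have key: "\<bar>dz a\<bar> \<le> \<bar>dz b\<bar>" if ha: "dz a \<noteq> 0" and hb: "dz b \<noteq> 0" and hl: "LL b = LL a" for a b
  proof -
    obtain n m where n: "fst b = lp a n" and m: "snd b = lp a m"
      using fst_in_LL[of b] snd_in_LL[of b] hl LL_iff by metis
    have "dz b = of_int (fst n * snd m - snd n * fst m) * dz a"
      unfolding dz_def n m lp_def det2_def by (simp add: algebra_simps)
    moreover have k: "fst n * snd m - snd n * fst m \<noteq> 0" proof
      assume "fst n * snd m - snd n * fst m = 0"
      then have "dz b = 0" using calculation by simp
      then show False using hb by simp
    qed
    ultimately show ?thesis
    proof -
      assume e: "dz b = of_int (fst n * snd m - snd n * fst m) * dz a"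
      have "\<bar>dz b\<bar> = \<bar>of_int (fst n * snd m - snd n * fst m)\<bar> * \<bar>dz a\<bar>" using e by (simp add: abs_mult)
      moreover have "\<bar>real_of_int (fst n * snd m - snd n * fst m)\<bar> \<ge> 1" using k
        by (metis of_int_1_le_iff of_int_abs zero_less_abs_iff int_one_le_iff_zero_less)
      ultimately show ?thesis
        using mult_right_mono[of 1 "\<bar>real_of_int (fst n * snd m - snd n * fst m)\<bar>" "\<bar>dz a\<bar>"] by simp
    qed
  qed
  show ?thesis using key[of z z'] key[of z' z] assms by auto
qed



lemma finite_min_elem:
  fixes f :: "'a \<Rightarrow> real"
  assumes "finite S" "S \<noteq> {}"
  shows "\<exists>x\<in>S. \<forall>y\<in>S. f x \<le> f y"
proof -
  have "Min (f ` S) \<in> f ` S" using assms by simp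
  then obtain x where x: "x \<in> S" "f x = Min (f ` S)" by auto
  have "\<forall>y\<in>S. f x \<le> f y" using x assms by simp
  then show ?thesis using x by blast
qed

lemma round_half: "\<bar>x - of_int \<lfloor>x + 1/2\<rfloor>\<bar> \<le> (1/2::real)"
  using floor_correct[of "x + 1/2"] unfolding of_int_add of_int_1 by linarith

lemma norm_rot: "norm (- snd u, fst u) = norm (u::pt)"
  by (cases u) (simp add: norm_Pair add.commute)

lemma det2_rot: "det2 u (- snd u, fst u) = (norm u)^2"
  by (cases u) (simp add: det2_def norm_Pair power2_eq_square)

lemma reduced_basis:
  assumes d: "dz z \<noteq> 0" and s: "s > 0" and cov: "\<forall>x. \<exists>y\<in>LL z. norm (y - x) \<le> s"
  shows "\<exists>z'. LL z' = LL z \<and> dz z' \<noteq> 0 \<and> norm (fst z') \<le> 4 * s \<and> norm (snd z') \<le> 4 * s"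
proof -
  define B where "B = LL z \<inter> cball 0 (4 * s)"
  have finB: "finite B" using finite_LL_ball[OF d] B_def by simp
  define S1 where "S1 = B - {0}"
  obtain y0 where y0: "y0 \<in> LL z" "norm (y0 - (2 * s, 0)) \<le> s" using cov by blast
  have n2: "norm ((2 * s,0::real)) = 2 * s"
  proof -
    have "norm ((2 * s,0::real)) = sqrt ((2 * s)^2)" by (simp add: norm_Pair)
    also have "\<dots> = 2 * s" using s by (subst real_sqrt_abs) simp
    finally show ?thesis .
  qed
  have "norm y0 \<ge> s" using norm_triangle_ineq2[of "(2 * s,0::real)" y0] y0(2) n2
    by (simp add: norm_minus_commute)
  moreover have "norm y0 \<le> 3 * s" using norm_triangle_ineq[of "y0 - (2 * s,0)" "(2 * s,0)"] y0(2) n2 by simp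
  ultimately have "y0 \<in> S1" using y0 s by (auto simp: S1_def B_def)
  then obtain u where u: "u \<in> S1" "\<forall>y\<in>S1. norm u \<le> norm y"
    using finite_min_elem[of S1 norm] finB S1_def by blast
  have u0: "u \<noteq> 0" "u \<in> LL z" "norm u \<le> 4 * s" using u(1) by (auto simp: S1_def B_def)
  have nu: "norm u > 0" using u0 by simp
  define x1 where "x1 = (3 * s / norm u) *\<^sub>R (- snd u, fst u)"
  have dx1: "det2 u x1 = 3 * s*norm u"
    unfolding x1_def det2_scale2 det2_rot using nu by (simp add: power2_eq_square)
  have nx1: "norm x1 = 3 * s" unfolding x1_def norm_scaleR norm_rot using nu s by simp
  obtain y1 where y1: "y1 \<in> LL z" "norm (y1 - x1) \<le> s" using cov by blast
  have "\<bar>det2 u (y1 - x1)\<bar> \<le> norm u * s"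
    using det2_le[of u "y1 - x1"] y1(2) nu by (meson mult_left_mono norm_ge_zero order_trans)
  moreover have "det2 u y1 = det2 u x1 + det2 u (y1 - x1)" by (simp add: det2_diff2)
  ultimately have "det2 u y1 \<ge> 2 * s*norm u" using dx1 by (simp add: abs_le_iff algebra_simps)
  then have dy1: "det2 u y1 \<noteq> 0" using s nu by (smt (verit) mult_pos_pos)
  have "norm y1 \<le> 4 * s" using norm_triangle_ineq[of "y1 - x1" x1] y1(2) nx1 by simp
  define S2 where "S2 = {y\<in>B. det2 u y \<noteq> 0}"
  have "y1 \<in> S2" using dy1 y1 \<open>norm y1 \<le> 4 * s\<close> by (simp add: S2_def B_def)
  moreover have "finite S2" using finB S2_def by simp
  ultimately obtain v where v: "v \<in> S2" "\<forall>y\<in>S2. norm v \<le> norm y"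
    using finite_min_elem[of S2 norm] by blast
  have v0: "det2 u v \<noteq> 0" "v \<in> LL z" "norm v \<le> 4 * s" using v(1) by (auto simp: S2_def B_def)
  have "v \<noteq> 0" using v0(1) by (auto simp: det2_def)
  then have "v \<in> S1" using v0 by (simp add: S1_def B_def)
  then have uv: "norm u \<le> norm v" using u by blast
  define z' where "z' = (u, v)"
  have dz': "dz z' \<noteq> 0" using v0 by (simp add: z'_def dz_def)
  have sub1: "LL z' \<subseteq> LL z" using LL_sub[of z' z] u0 v0 by (simp add: z'_def)
  have sub2: "LL z \<subseteq> LL z'"
  proof
    fix w assume w: "w \<in> LL z"
    define \<alpha> where "\<alpha> = det2 w (snd z') / dz z'"
    define \<beta> where "\<beta> = det2 (fst z') w / dz z'"
    have wd: "w = \<alpha> *\<^sub>R u + \<beta> *\<^sub>R v" using decomp[OF dz', of w] unfolding \<alpha>_def \<beta>_def z'_def by simp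
    define i where "i = \<lfloor>\<alpha> + 1/2\<rfloor>"
    define j where "j = \<lfloor>\<beta> + 1/2\<rfloor>"
    define a' where "a' = \<alpha> - of_int i"
    define b' where "b' = \<beta> - of_int j"
    have ha: "\<bar>a'\<bar> \<le> 1/2" unfolding a'_def i_def by (rule round_half)
    have hb: "\<bar>b'\<bar> \<le> 1/2" unfolding b'_def j_def by (rule round_half)
    define w' where "w' = w - lp z' (i,j)"
    have w'e: "w' = a' *\<^sub>R u + b' *\<^sub>R v"
      unfolding w'_def wd lp_def z'_def a'_def b'_def by (simp add: algebra_simps)
    have w'L: "w' \<in> LL z" unfolding w'_def using LL_diff[OF w] lp_in sub1 by blast
    have na: "norm (a' *\<^sub>R u) \<le> norm u / 2" using ha by (simp add: mult_right_mono[of _ "1/2" "norm u", simplified])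
    have nb: "norm (b' *\<^sub>R v) \<le> norm v / 2" using hb by (simp add: mult_right_mono[of _ "1/2" "norm v", simplified])
    have nw': "norm w' \<le> norm (a' *\<^sub>R u) + norm (b' *\<^sub>R v)" unfolding w'e by (rule norm_triangle_ineq)
    have nw'2: "norm w' \<le> norm v" using nw' na nb uv by linarith
    have "b' = 0"
    proof (rule ccontr)
      assume b0: "b' \<noteq> 0"
      have "det2 u w' = b' * det2 u v" unfolding w'e by (simp add: det2_add2 det2_scale2 det2_self)
      then have "det2 u w' \<noteq> 0" using b0 v0 by simp
      then have "w' \<in> S2" using w'L nw'2 v0 by (simp add: S2_def B_def)
      then have "norm v \<le> norm w'" using v by blast
      then have nvw: "norm v \<le> norm w'" .
      have nweq: "norm (a' *\<^sub>R u + b' *\<^sub>R v) = norm w'" using w'e by simp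
      have e1: "norm (a' *\<^sub>R u) = norm v / 2" using nw' na nb uv nvw by linarith
      have e2: "norm (b' *\<^sub>R v) = norm v / 2" using nw' na nb uv nvw by linarith
      have e3: "norm (a' *\<^sub>R u + b' *\<^sub>R v) = norm (a' *\<^sub>R u) + norm (b' *\<^sub>R v)"
        using nweq nw' na nb uv nvw by linarith
      note eqs = e1 e2 e3
      have "norm (a' *\<^sub>R u) *\<^sub>R (b' *\<^sub>R v) = norm (b' *\<^sub>R v) *\<^sub>R (a' *\<^sub>R u)"
        using eqs(3) norm_triangle_eq by blast
      then have "(norm v / 2) *\<^sub>R (b' *\<^sub>R v) = (norm v / 2) *\<^sub>R (a' *\<^sub>R u)" by (simp only: e1 e2)
      moreover have "norm v / 2 \<noteq> 0" using \<open>v \<noteq> 0\<close> by simp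
      ultimately have "b' *\<^sub>R v = a' *\<^sub>R u" using scaleR_cancel_left by blast
      then have "det2 u (b' *\<^sub>R v) = det2 u (a' *\<^sub>R u)" by simp
      then have "b' * det2 u v = 0" by (simp add: det2_scale2 det2_self)
      then show False using b0 v0 by simp
    qed
    have "a' = 0"
    proof (rule ccontr)
      assume a0: "a' \<noteq> 0"
      have "w' = a' *\<^sub>R u" using w'e \<open>b' = 0\<close> by simp
      then have "w' \<noteq> 0" "norm w' \<le> norm u / 2" using a0 u0 na by auto
      then have "w' \<in> S1" using w'L nw'2 v0 by (simp add: S1_def B_def)
      then have "norm u \<le> norm w'" using u by blast
      then show False using \<open>norm w' \<le> norm u / 2\<close> nu by linarith
    qed
    then have "w = lp z' (i,j)" using \<open>b' = 0\<close> w'e w'_def by simp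
    then show "w \<in> LL z'" using lp_in by metis
  qed
  show ?thesis using sub1 sub2 dz' u0 v0 by (intro exI[of _ z']) (auto simp: z'_def)
qed



lemma ev_ex: "eventually P sequentially \<Longrightarrow> \<exists>m. P m"
  by (auto simp: eventually_sequentially)

lemma finite_avoid:
  fixes K :: "'a::metric_space set"
  assumes "finite P" "closed K" "P \<inter> K = {}"
  shows "\<exists>e>0. \<forall>p\<in>P. \<forall>y. dist y p < e \<longrightarrow> y \<notin> K"
  using assms
proof (induction P rule: finite_induct)
  case empty
  then show ?case by (intro exI[of _ 1]) auto
next
  case (insert p P)
  then obtain e1 where e1: "e1 > 0" "\<forall>p\<in>P. \<forall>y. dist y p < e1 \<longrightarrow> y \<notin> K" by auto
  have "p \<in> - K" "open (- K)" using insert by auto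
  then obtain e2 where e2: "e2 > 0" "ball p e2 \<subseteq> - K" using open_contains_ball by blast
  show ?case
  proof (intro exI[of _ "min e1 e2"] conjI ballI allI impI)
    show "min e1 e2 > 0" using e1 e2 by simp
    fix q y assume q: "q \<in> insert p P" and d: "dist y q < min e1 e2"
    show "y \<notin> K"
    proof (cases "q = p")
      case True
      then have "y \<in> ball p e2" using d by (simp add: dist_commute)
      then show ?thesis using e2 by auto
    next
      case False
      then show ?thesis using q d e1 by auto
    qed
  qed
qed

lemma finite_sep_real:
  fixes S :: "real set"
  assumes "finite S"
  shows "\<exists>d>0. \<forall>v\<in>S. v \<noteq> a \<longrightarrow> d \<le> \<bar>v - a\<bar>"
proof -
  obtain e where e: "e > 0" "\<forall>p\<in>S - {a}. \<forall>y. dist y p < e \<longrightarrow> y \<notin> {a}"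
    using finite_avoid[of "S - {a}" "{a}"] assms by auto
  show ?thesis
  proof (intro exI[of _ e] conjI ballI impI)
    fix v assume "v \<in> S" "v \<noteq> a"
    then have "\<not> dist a v < e" using e by auto
    then show "e \<le> \<bar>v - a\<bar>" by (simp add: dist_real_def abs_minus_commute)
  qed (use e in auto)
qed

lemma lp_lip: "norm (lp z n - lp z0 n) \<le> (\<bar>of_int (fst n)\<bar> + \<bar>of_int (snd n)\<bar>) * norm (z - z0)"
proof -
  have "lp z n - lp z0 n = of_int (fst n) *\<^sub>R (fst z - fst z0) + of_int (snd n) *\<^sub>R (snd z - snd z0)"
    by (simp add: lp_def algebra_simps)
  also have "norm \<dots> \<le> \<bar>of_int (fst n)\<bar> * norm (fst z - fst z0) + \<bar>of_int (snd n)\<bar> * norm (snd z - snd z0)"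
    by (rule order_trans[OF norm_triangle_ineq]) simp
  also have "\<dots> \<le> \<bar>of_int (fst n)\<bar> * norm (z - z0) + \<bar>of_int (snd n)\<bar> * norm (z - z0)"
  proof -
    have w: "z - z0 = (fst z - fst z0, snd z - snd z0)" by (simp add: prod_eq_iff)
    have "norm (fst z - fst z0) \<le> norm (z - z0)" by (subst w) (rule norm_fst_le)
    moreover have "norm (snd z - snd z0) \<le> norm (z - z0)" by (subst w) (rule norm_snd_le)
    ultimately show ?thesis by (intro add_mono mult_left_mono) auto
  qed
  finally show ?thesis by (simp add: algebra_simps)
qed

lemma dz_tendsto: "zs \<longlonglongrightarrow> z0 \<Longrightarrow> (\<lambda>m. dz (zs m)) \<longlonglongrightarrow> dz z0"
  unfolding dz_def det2_def by (intro tendsto_intros)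

lemma mem_cbox_pt: "y \<in> cbox p q \<longleftrightarrow> fst p \<le> fst y \<and> fst y \<le> fst q \<and> snd p \<le> snd y \<and> snd y \<le> snd q"
  for y p q :: pt
  by (cases p, cases q, cases y) (auto simp: cbox_Pair_eq cbox_interval)

lemma mem_transl: "y \<in> (\<lambda>x. t + x) ` R \<longleftrightarrow> y - t \<in> R" for y t :: pt
  by (auto simp: image_iff intro!: bexI[of _ "y - t"])

lemma piercing_box:
  assumes "R = cbox p q"
  shows "(\<forall>t. \<exists>y\<in>P. y \<in> (\<lambda>x. t + x) ` R) \<longleftrightarrow> pbox (fst q - fst p) (snd q - snd p) P"
proof
  assume h: "\<forall>t. \<exists>y\<in>P. y \<in> (\<lambda>x. t + x) ` R"
  show "pbox (fst q - fst p) (snd q - snd p) P"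
    unfolding pbox_def
  proof (intro allI)
    fix c1 c2
    obtain y where "y \<in> P" "y - (c1 - fst p, c2 - snd p) \<in> R" using h mem_transl by blast
    then show "\<exists>y\<in>P. c1 \<le> fst y \<and> fst y \<le> c1 + (fst q - fst p) \<and> c2 \<le> snd y \<and> snd y \<le> c2 + (snd q - snd p)"
      using assms by (auto simp: mem_cbox_pt)
  qed
next
  assume h: "pbox (fst q - fst p) (snd q - snd p) P"
  show "\<forall>t. \<exists>y\<in>P. y \<in> (\<lambda>x. t + x) ` R"
  proof
    fix t :: pt
    obtain y where y: "y \<in> P" "fst t + fst p \<le> fst y" "fst y \<le> fst t + fst p + (fst q - fst p)"
      "snd t + snd p \<le> snd y" "snd y \<le> snd t + snd p + (snd q - snd p)"
      using h unfolding pbox_def by blast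
    have "y \<in> (\<lambda>x. t + x) ` R"
      using assms y by (auto simp: mem_transl mem_cbox_pt)
    then show "\<exists>y\<in>P. y \<in> (\<lambda>x. t + x) ` R" using y(1) by blast
  qed
qed

lemma cover_pbox:
  assumes "pbox a b P" "a \<ge> 0" "b \<ge> 0"
  shows "\<exists>y\<in>P. norm (y - x) \<le> a + b"
proof -
  obtain y where y: "y \<in> P" "fst x \<le> fst y" "fst y \<le> fst x + a" "snd x \<le> snd y" "snd y \<le> snd x + b"
    using assms(1) unfolding pbox_def by blast
  have "norm (y - x) \<le> \<bar>fst (y - x)\<bar> + \<bar>snd (y - x)\<bar>" by (rule norm_pt_le)
  also have "\<dots> \<le> a + b" using y by simp
  finally show ?thesis using y by blast
qed

lemma pbox_limit:
  assumes lim: "zs \<longlonglongrightarrow> z0" and d0: "dz z0 \<noteq> 0" and pb: "\<forall>m. pbox a b (LL (zs m))"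
    and a: "a \<ge> 0" and b: "b \<ge> 0"
  shows "pbox a b (LL z0)"
  unfolding pbox_def
proof (intro allI)
  fix c1 c2
  define K where "K = {y::pt. c1 \<le> fst y \<and> fst y \<le> c1 + a \<and> c2 \<le> snd y \<and> snd y \<le> c2 + b}"
  have Kc: "K = cbox (c1,c2) (c1+a, c2+b)" unfolding K_def by (auto simp: mem_cbox_pt)
  have cK: "closed K" unfolding Kc by (rule closed_cbox)
  define R where "R = \<bar>c1\<bar> + \<bar>c2\<bar> + a + b"
  define N where "N = \<lceil>R * (norm (fst z0) + norm (snd z0) + 2) / (\<bar>dz z0\<bar> / 2)\<rceil>"
  define Bx where "Bx = {n::int\<times>int. \<bar>fst n\<bar> \<le> N \<and> \<bar>snd n\<bar> \<le> N}"
  have finB: "finite (lp z0 ` Bx)" using finite_int_box Bx_def by simp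
  show "\<exists>y\<in>LL z0. c1 \<le> fst y \<and> fst y \<le> c1 + a \<and> c2 \<le> snd y \<and> snd y \<le> c2 + b"
  proof (rule ccontr)
    assume "\<not> ?thesis"
    then have disj: "lp z0 ` Bx \<inter> K = {}" using lp_in unfolding K_def by blast
    obtain e where e: "e > 0" "\<forall>p\<in>lp z0 ` Bx. \<forall>y. dist y p < e \<longrightarrow> y \<notin> K"
      using finite_avoid[OF finB cK disj] by blast
    have "0 \<le> R * (norm (fst z0) + norm (snd z0) + 2) / (\<bar>dz z0\<bar> / 2)"
      unfolding R_def using a b by (intro divide_nonneg_nonneg mult_nonneg_nonneg) auto
    then have N0: "N \<ge> 0" unfolding N_def using ceiling_mono ceiling_zero by metis
    have ev1: "eventually (\<lambda>m. \<bar>dz (zs m)\<bar> > \<bar>dz z0\<bar> / 2) sequentially"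
      using d0 by (intro order_tendstoD(1)[OF tendsto_rabs[OF dz_tendsto[OF lim]]]) simp
    have ev2: "eventually (\<lambda>m. norm (fst (zs m)) < norm (fst z0) + 1) sequentially"
      by (intro order_tendstoD(2)[OF tendsto_norm[OF tendsto_fst[OF lim]]]) simp
    have ev3: "eventually (\<lambda>m. norm (snd (zs m)) < norm (snd z0) + 1) sequentially"
      by (intro order_tendstoD(2)[OF tendsto_norm[OF tendsto_snd[OF lim]]]) simp
    have ev4: "eventually (\<lambda>m. dist (zs m) z0 < e / (2 * of_int N + 1)) sequentially"
      using lim e N0 unfolding tendsto_iff by simp
    obtain m where m: "\<bar>dz (zs m)\<bar> > \<bar>dz z0\<bar> / 2" "norm (fst (zs m)) < norm (fst z0) + 1"
      "norm (snd (zs m)) < norm (snd z0) + 1" "dist (zs m) z0 < e / (2 * of_int N + 1)"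
      using ev_ex[OF eventually_conj[OF ev1 eventually_conj[OF ev2 eventually_conj[OF ev3 ev4]]]] by blast
    have dm: "dz (zs m) \<noteq> 0" using m(1) by auto
    obtain y where y: "y \<in> LL (zs m)" "y \<in> K" using pb unfolding pbox_def K_def by blast
    obtain n where n: "y = lp (zs m) n" using y LL_iff by blast
    have ny: "norm y \<le> R"
    proof -
      have "norm y \<le> \<bar>fst y\<bar> + \<bar>snd y\<bar>" by (rule norm_pt_le)
      also have "\<dots> \<le> R" using y(2) a b unfolding K_def R_def by auto
      finally show ?thesis .
    qed
    have R0: "R \<ge> 0" unfolding R_def using a b by simp
    have "R * (norm (fst (zs m)) + norm (snd (zs m))) / \<bar>dz (zs m)\<bar>
          \<le> R * (norm (fst z0) + norm (snd z0) + 2) / (\<bar>dz z0\<bar> / 2)"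
    proof (rule frac_le)
      show "0 \<le> R * (norm (fst z0) + norm (snd z0) + 2)" using R0 by simp
      show "R * (norm (fst (zs m)) + norm (snd (zs m))) \<le> R * (norm (fst z0) + norm (snd z0) + 2)"
        using m R0 by (intro mult_left_mono) auto
      show "0 < \<bar>dz z0\<bar> / 2" using d0 by simp
      show "\<bar>dz z0\<bar> / 2 \<le> \<bar>dz (zs m)\<bar>" using m by simp
    qed
    then have "\<lceil>R * (norm (fst (zs m)) + norm (snd (zs m))) / \<bar>dz (zs m)\<bar>\<rceil> \<le> N"
      unfolding N_def by (rule ceiling_mono)
    then have nB: "n \<in> Bx" using coeff_box[OF dm, of n R] ny n unfolding Bx_def by auto
    have "dist y (lp z0 n) < e"
    proof -
      have "dist y (lp z0 n) = norm (lp (zs m) n - lp z0 n)" by (simp add: n dist_norm)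
      also have "\<dots> \<le> (\<bar>of_int (fst n)\<bar> + \<bar>of_int (snd n)\<bar>) * norm (zs m - z0)" by (rule lp_lip)
      also have "\<dots> \<le> (2 * of_int N + 1) * norm (zs m - z0)"
        using nB unfolding Bx_def by (intro mult_right_mono) auto
      also have "\<dots> < e"
        using m(4) N0 by (simp add: dist_norm pos_less_divide_eq mult.commute)
      finally show ?thesis .
    qed
    then show False using e nB y by blast
  qed
qed



lemma ex_max: "finite (S::real set) \<Longrightarrow> \<exists>m. c0 \<le> m \<and> (\<forall>x\<in>S. x \<le> m) \<and> (m = c0 \<or> m \<in> S)"
  by (rule exI[of _ "Max (insert c0 S)"]) (use Max_in[of "insert c0 S"] in auto)

lemma ex_min: "finite (S::real set) \<Longrightarrow> \<exists>m. m \<le> c0 \<and> (\<forall>x\<in>S. m \<le> x) \<and> (m = c0 \<or> m \<in> S)"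
  by (rule exI[of _ "Min (insert c0 S)"]) (use Min_in[of "insert c0 S"] in auto)

lemma norm_le_coords: "\<bar>fst y\<bar> \<le> A \<Longrightarrow> \<bar>snd y\<bar> \<le> B \<Longrightarrow> norm (y::pt) \<le> A + B"
  using norm_pt_le[of y] by linarith

lemma box_construct:
  assumes d: "dz z \<noteq> 0" and a: "a > 0" and b: "b > 0"
    and empty: "\<forall>y\<in>LL z. \<not>(c1 \<le> fst y \<and> fst y \<le> c1 + a \<and> c2 \<le> snd y \<and> snd y \<le> c2 + b)"
  shows "\<exists>l r dn up. c1 - 1 \<le> l \<and> l < c1 \<and> c1 + a < r \<and> r \<le> c1 + a + 1 \<and>
    c2 - 1 \<le> dn \<and> dn < c2 \<and> c2 + b < up \<and> up \<le> c2 + b + 1 \<and>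
    (\<forall>y\<in>LL z. \<not>(l < fst y \<and> fst y < r \<and> dn < snd y \<and> snd y < up)) \<and>
    (r - l \<ge> a + 1 \<or> (\<exists>w\<in>LL z. fst w = r - l \<and> norm w \<le> a + b + 4)) \<and>
    (up - dn \<ge> b + 1 \<or> (\<exists>w\<in>LL z. snd w = up - dn \<and> norm w \<le> a + b + 4))"
proof -
  define M where "M = \<bar>c1\<bar> + \<bar>c2\<bar> + a + b + 2"
  define Q where "Q = LL z \<inter> cball 0 M"
  have fQ: "finite Q" unfolding Q_def using finite_LL_ball[OF d] by simp
  have inQ: "y \<in> Q" if "y \<in> LL z" "c1 - 1 \<le> fst y" "fst y \<le> c1 + a + 1"
      "c2 - 1 \<le> snd y" "snd y \<le> c2 + b + 1" for y
  proof -
    have "norm y \<le> (\<bar>c1\<bar> + a + 1) + (\<bar>c2\<bar> + b + 1)"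
      using that a b by (intro norm_le_coords) auto
    then show ?thesis using that unfolding Q_def M_def by simp
  qed
  define strip where "strip y \<longleftrightarrow> c2 \<le> snd y \<and> snd y \<le> c2 + b" for y :: pt
  obtain l where l: "c1 - 1 \<le> l" "\<forall>x\<in>fst ` {y\<in>Q. strip y \<and> c1 - 1 \<le> fst y \<and> fst y < c1}. x \<le> l"
    "l = c1 - 1 \<or> l \<in> fst ` {y\<in>Q. strip y \<and> c1 - 1 \<le> fst y \<and> fst y < c1}"
    using ex_max[of "fst ` {y\<in>Q. strip y \<and> c1 - 1 \<le> fst y \<and> fst y < c1}" "c1 - 1"] fQ by auto
  have l1: "l < c1" using l(3) by auto
  have l2: "fst y \<le> l" if "y \<in> LL z" "strip y" "c1 - 1 \<le> fst y" "fst y < c1" for y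
  proof -
    have "y \<in> Q" using inQ[of y] that a b unfolding strip_def by auto
    then have "fst y \<in> fst ` {y\<in>Q. strip y \<and> c1 - 1 \<le> fst y \<and> fst y < c1}" using that by auto
    then show ?thesis using l(2) by blast
  qed
  obtain r where r: "r \<le> c1 + a + 1" "\<forall>x\<in>fst ` {y\<in>Q. strip y \<and> c1 + a < fst y \<and> fst y \<le> c1 + a + 1}. r \<le> x"
    "r = c1 + a + 1 \<or> r \<in> fst ` {y\<in>Q. strip y \<and> c1 + a < fst y \<and> fst y \<le> c1 + a + 1}"
    using ex_min[of "fst ` {y\<in>Q. strip y \<and> c1 + a < fst y \<and> fst y \<le> c1 + a + 1}" "c1 + a + 1"] fQ by auto
  have r1: "c1 + a < r" using r(3) by auto
  have r2: "r \<le> fst y" if "y \<in> LL z" "strip y" "c1 + a < fst y" "fst y \<le> c1 + a + 1" for y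
  proof -
    have "y \<in> Q" using inQ[of y] that a b unfolding strip_def by auto
    then have "fst y \<in> fst ` {y\<in>Q. strip y \<and> c1 + a < fst y \<and> fst y \<le> c1 + a + 1}" using that by auto
    then show ?thesis using r(2) by blast
  qed
  obtain dn where dn: "c2 - 1 \<le> dn" "\<forall>x\<in>snd ` {y\<in>Q. l < fst y \<and> fst y < r \<and> c2 - 1 \<le> snd y \<and> snd y < c2}. x \<le> dn"
    "dn = c2 - 1 \<or> dn \<in> snd ` {y\<in>Q. l < fst y \<and> fst y < r \<and> c2 - 1 \<le> snd y \<and> snd y < c2}"
    using ex_max[of "snd ` {y\<in>Q. l < fst y \<and> fst y < r \<and> c2 - 1 \<le> snd y \<and> snd y < c2}" "c2 - 1"] fQ by auto
  have dn1: "dn < c2" using dn(3) by auto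
  have dn2: "snd y \<le> dn" if "y \<in> LL z" "l < fst y" "fst y < r" "c2 - 1 \<le> snd y" "snd y < c2" for y
  proof -
    have "y \<in> Q" using inQ[of y] that l(1) r(1) b by auto
    then have "snd y \<in> snd ` {y\<in>Q. l < fst y \<and> fst y < r \<and> c2 - 1 \<le> snd y \<and> snd y < c2}" using that by auto
    then show ?thesis using dn(2) by blast
  qed
  obtain up where up: "up \<le> c2 + b + 1" "\<forall>x\<in>snd ` {y\<in>Q. l < fst y \<and> fst y < r \<and> c2 + b < snd y \<and> snd y \<le> c2 + b + 1}. up \<le> x"
    "up = c2 + b + 1 \<or> up \<in> snd ` {y\<in>Q. l < fst y \<and> fst y < r \<and> c2 + b < snd y \<and> snd y \<le> c2 + b + 1}"
    using ex_min[of "snd ` {y\<in>Q. l < fst y \<and> fst y < r \<and> c2 + b < snd y \<and> snd y \<le> c2 + b + 1}" "c2 + b + 1"] fQ by auto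
  have up1: "c2 + b < up" using up(3) by auto
  have up2: "up \<le> snd y" if "y \<in> LL z" "l < fst y" "fst y < r" "c2 + b < snd y" "snd y \<le> c2 + b + 1" for y
  proof -
    have "y \<in> Q" using inQ[of y] that l(1) r(1) b by auto
    then have "snd y \<in> snd ` {y\<in>Q. l < fst y \<and> fst y < r \<and> c2 + b < snd y \<and> snd y \<le> c2 + b + 1}" using that by auto
    then show ?thesis using up(2) by blast
  qed
  have emp: "\<forall>y\<in>LL z. \<not>(l < fst y \<and> fst y < r \<and> dn < snd y \<and> snd y < up)"
  proof (intro ballI notI)
    fix y assume y: "y \<in> LL z" and box: "l < fst y \<and> fst y < r \<and> dn < snd y \<and> snd y < up"
    show False
    proof (cases "snd y < c2")
      case True
      then show False using dn2[OF y] box dn(1) by force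
    next
      case c2: False
      show False
      proof (cases "snd y > c2 + b")
        case True
        then show False using up2[OF y] box up(1) by force
      next
        case False
        then have st: "strip y" using c2 unfolding strip_def by simp
        show False
        proof (cases "fst y < c1")
          case True
          then show False using l2[OF y st] box l(1) by force
        next
          case c1: False
          show False
          proof (cases "fst y > c1 + a")
            case True
            then show False using r2[OF y st] box r(1) by force
          next
            case False
            then show False using empty y st c1 unfolding strip_def by auto
          qed
        qed
      qed
    qed
  qed
  have W: "r - l \<ge> a + 1 \<or> (\<exists>w\<in>LL z. fst w = r - l \<and> norm w \<le> a + b + 4)"
  proof (cases "l = c1 - 1 \<or> r = c1 + a + 1")
    case True
    then show ?thesis using l1 r1 by auto
  next
    case False
    then obtain y1 y2 where y1: "y1 \<in> Q" "strip y1" "fst y1 = l" and y2: "y2 \<in> Q" "strip y2" "fst y2 = r"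
      using l(3) r(3) by auto
    have "y2 - y1 \<in> LL z" using y1 y2 LL_diff unfolding Q_def by blast
    moreover have "norm (y2 - y1) \<le> (a + 2) + b"
    proof (rule norm_le_coords)
      have "fst (y2 - y1) = r - l" using y1(3) y2(3) by simp
      moreover have "c1 - 1 \<le> l" "r \<le> c1 + a + 1" "l < r" using l(1) r(1) l1 r1 a by auto
      ultimately show "\<bar>fst (y2 - y1)\<bar> \<le> a + 2" by simp
      show "\<bar>snd (y2 - y1)\<bar> \<le> b" using y1(2) y2(2) unfolding strip_def by auto
    qed
    ultimately show ?thesis using y1 y2 b by (intro disjI2 bexI[of _ "y2 - y1"]) auto
  qed
  have H: "up - dn \<ge> b + 1 \<or> (\<exists>w\<in>LL z. snd w = up - dn \<and> norm w \<le> a + b + 4)"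
  proof (cases "dn = c2 - 1 \<or> up = c2 + b + 1")
    case True
    then show ?thesis using dn1 up1 by auto
  next
    case False
    then obtain y3 y4 where y3: "y3 \<in> Q" "l < fst y3" "fst y3 < r" "snd y3 = dn"
      and y4: "y4 \<in> Q" "l < fst y4" "fst y4 < r" "snd y4 = up"
      using dn(3) up(3) by auto
    have "y4 - y3 \<in> LL z" using y3 y4 LL_diff unfolding Q_def by blast
    moreover have "norm (y4 - y3) \<le> (a + 2) + (b + 2)"
    proof (rule norm_le_coords)
      have "c1 - 1 \<le> l" "r \<le> c1 + a + 1" using l(1) r(1) by auto
      then show "\<bar>fst (y4 - y3)\<bar> \<le> a + 2" using y3(2,3) y4(2,3) by auto
      have "snd (y4 - y3) = up - dn" using y3(4) y4(4) by simp
      moreover have "c2 - 1 \<le> dn" "up \<le> c2 + b + 1" "dn < up" using dn(1) up(1) dn1 up1 b by auto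
      ultimately show "\<bar>snd (y4 - y3)\<bar> \<le> b + 2" by simp
    qed
    ultimately show ?thesis using y3 y4 by (intro disjI2 bexI[of _ "y4 - y3"]) auto
  qed
  show ?thesis
    using l(1) l1 r1 r(1) dn(1) dn1 up1 up(1) emp W H by blast
qed



lemma fail_box:
  assumes d: "dz z \<noteq> 0" and a: "a > 0" and b: "b > 0" and np: "\<not> pbox a b (LL z)"
  shows "\<exists>l r dn up. \<bar>l\<bar> \<le> norm (fst z) + norm (snd z) + a + 1 \<and> \<bar>r\<bar> \<le> norm (fst z) + norm (snd z) + a + 1 \<and>
    \<bar>dn\<bar> \<le> norm (fst z) + norm (snd z) + b + 1 \<and> \<bar>up\<bar> \<le> norm (fst z) + norm (snd z) + b + 1 \<and>
    l + a < r \<and> dn + b < up \<and>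
    (\<forall>y\<in>LL z. \<not>(l < fst y \<and> fst y < r \<and> dn < snd y \<and> snd y < up)) \<and>
    (r - l \<ge> a + 1 \<or> (\<exists>w\<in>LL z. fst w = r - l \<and> norm w \<le> a + b + 4)) \<and>
    (up - dn \<ge> b + 1 \<or> (\<exists>w\<in>LL z. snd w = up - dn \<and> norm w \<le> a + b + 4))"
proof -
  obtain c1 c2 where e: "\<forall>y\<in>LL z. \<not>(c1 \<le> fst y \<and> fst y \<le> c1 + a \<and> c2 \<le> snd y \<and> snd y \<le> c2 + b)"
    using np unfolding pbox_def by blast
  obtain p where p: "p \<in> LL z" "norm ((c1,c2) - p) \<le> norm (fst z) + norm (snd z)"
    using reduce_pt[OF d] by blast
  define c' where "c' = (c1,c2) - p"
  have e': "\<forall>y\<in>LL z. \<not>(fst c' \<le> fst y \<and> fst y \<le> fst c' + a \<and> snd c' \<le> snd y \<and> snd y \<le> snd c' + b)"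
  proof (intro ballI notI)
    fix y assume y: "y \<in> LL z" and h: "fst c' \<le> fst y \<and> fst y \<le> fst c' + a \<and> snd c' \<le> snd y \<and> snd y \<le> snd c' + b"
    have "y + p \<in> LL z" using LL_add y p(1) by blast
    moreover have "c1 \<le> fst (y + p) \<and> fst (y + p) \<le> c1 + a \<and> c2 \<le> snd (y + p) \<and> snd (y + p) \<le> c2 + b"
      using h unfolding c'_def by auto
    ultimately show False using e by blast
  qed
  have b1: "\<bar>fst c'\<bar> \<le> norm (fst z) + norm (snd z)" "\<bar>snd c'\<bar> \<le> norm (fst z) + norm (snd z)"
    using abs_fst_le[of c'] abs_snd_le[of c'] p(2) unfolding c'_def by linarith+
  obtain l r dn up where box: "fst c' - 1 \<le> l \<and> l < fst c' \<and> fst c' + a < r \<and> r \<le> fst c' + a + 1 \<and>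
    snd c' - 1 \<le> dn \<and> dn < snd c' \<and> snd c' + b < up \<and> up \<le> snd c' + b + 1 \<and>
    (\<forall>y\<in>LL z. \<not>(l < fst y \<and> fst y < r \<and> dn < snd y \<and> snd y < up)) \<and>
    (r - l \<ge> a + 1 \<or> (\<exists>w\<in>LL z. fst w = r - l \<and> norm w \<le> a + b + 4)) \<and>
    (up - dn \<ge> b + 1 \<or> (\<exists>w\<in>LL z. snd w = up - dn \<and> norm w \<le> a + b + 4))"
    using box_construct[OF d a b e'] by blast
  show ?thesis
    apply (rule exI[of _ l], rule exI[of _ r], rule exI[of _ dn], rule exI[of _ up])
    using box b1 a b by auto
qed

lemma norm_pair_le2: "norm (x, y) \<le> norm x + norm y"
  by (simp add: norm_Pair sqrt_sum_squares_le_sum)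

lemma coeff_unif:
  assumes "dz z0 \<noteq> 0" "\<bar>dz z\<bar> > \<bar>dz z0\<bar> / 2" "norm (fst z) < norm (fst z0) + 1" "norm (snd z) < norm (snd z0) + 1"
    "norm (lp z n) \<le> R" "R \<ge> 0"
  shows "\<bar>fst n\<bar> \<le> \<lceil>R * (norm (fst z0) + norm (snd z0) + 2) / (\<bar>dz z0\<bar> / 2)\<rceil> \<and>
         \<bar>snd n\<bar> \<le> \<lceil>R * (norm (fst z0) + norm (snd z0) + 2) / (\<bar>dz z0\<bar> / 2)\<rceil>"
proof -
  have dm: "dz z \<noteq> 0" using assms(2) by auto
  have d0: "\<bar>dz z0\<bar> / 2 \<ge> 0" by simp
  have "R * (norm (fst z) + norm (snd z)) / \<bar>dz z\<bar>
        \<le> R * (norm (fst z0) + norm (snd z0) + 2) / (\<bar>dz z0\<bar> / 2)"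
  proof -
    have False: "dz z0 \<noteq> 0" using assms(1) .
    show ?thesis
    proof (rule frac_le)
      show "0 \<le> R * (norm (fst z0) + norm (snd z0) + 2)" using assms(6) by simp
      show "R * (norm (fst z) + norm (snd z)) \<le> R * (norm (fst z0) + norm (snd z0) + 2)"
        using assms by (intro mult_left_mono) auto
      show "0 < \<bar>dz z0\<bar> / 2" using False by simp
      show "\<bar>dz z0\<bar> / 2 \<le> \<bar>dz z\<bar>" using assms by simp
    qed
  qed
  then have "\<lceil>R * (norm (fst z) + norm (snd z)) / \<bar>dz z\<bar>\<rceil> \<le> \<lceil>R * (norm (fst z0) + norm (snd z0) + 2) / (\<bar>dz z0\<bar> / 2)\<rceil>"
    by (rule ceiling_mono)
  then show ?thesis using coeff_box[OF dm assms(5)] by auto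
qed

lemma limit_gap:
  fixes pr :: "pt \<Rightarrow> real" and N :: int
  assumes N0: "N \<ge> 0" and pr: "pr = fst \<or> pr = snd"
    and lim: "zq \<longlonglongrightarrow> z0" and wl: "W \<longlonglongrightarrow> W0"
    and acond: "\<forall>m n. pr (lp z0 n) = a \<longrightarrow> pr (lp (zq m) n) = a"
    and gt: "\<forall>m. W m > a"
    and alt: "\<forall>m. W m \<ge> a + 1 \<or> (\<exists>n. \<bar>fst n\<bar> \<le> N \<and> \<bar>snd n\<bar> \<le> N \<and> pr (lp (zq m) n) = W m)"
  shows "W0 > a"
proof -
  have "W0 \<ge> a" using gt wl by (intro LIMSEQ_le_const[OF wl]) (auto intro: less_imp_le)
  moreover have "W0 \<noteq> a"
  proof
    assume W0: "W0 = a"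
    define Bx where "Bx = {n::int\<times>int. \<bar>fst n\<bar> \<le> N \<and> \<bar>snd n\<bar> \<le> N}"
    have "finite ((\<lambda>n. pr (lp z0 n)) ` Bx)" using finite_int_box Bx_def by simp
    then obtain \<delta> where \<delta>: "\<delta> > 0" "\<forall>v\<in>(\<lambda>n. pr (lp z0 n)) ` Bx. v \<noteq> a \<longrightarrow> \<delta> \<le> \<bar>v - a\<bar>"
      using finite_sep_real by blast
    have t1: "\<forall>e>0. eventually (\<lambda>m. dist (W m) a < e) sequentially" using wl W0 unfolding tendsto_iff by simp
    have t2: "\<forall>e>0. eventually (\<lambda>m. dist (zq m) z0 < e) sequentially" using lim unfolding tendsto_iff by simp
    have p1: "min 1 (\<delta>/2) > 0" using \<delta> by simp
    have p2: "(\<delta>/2) / (2 * of_int N + 1) > 0" using \<delta> N0 by simp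
    have ev1: "eventually (\<lambda>m. dist (W m) a < min 1 (\<delta>/2)) sequentially"
      using t1 p1 by blast
    have ev2: "eventually (\<lambda>m. dist (zq m) z0 < (\<delta>/2) / (2 * of_int N + 1)) sequentially"
      using t2 p2 by blast
    obtain m where m: "dist (W m) a < min 1 (\<delta>/2)" "dist (zq m) z0 < (\<delta>/2) / (2 * of_int N + 1)"
      using ev_ex[OF eventually_conj[OF ev1 ev2]] by blast
    have "W m < a + 1" using m(1) by (simp add: dist_real_def abs_less_iff)
    then have "\<exists>n. \<bar>fst n\<bar> \<le> N \<and> \<bar>snd n\<bar> \<le> N \<and> pr (lp (zq m) n) = W m"
      using alt[rule_format, of m] by (meson leD)
    then obtain n where n: "\<bar>fst n\<bar> \<le> N" "\<bar>snd n\<bar> \<le> N" "pr (lp (zq m) n) = W m" by blast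
    have "\<bar>pr (lp z0 n) - pr (lp (zq m) n)\<bar> \<le> norm (lp (zq m) n - lp z0 n)"
      using pr abs_fst_le[of "lp (zq m) n - lp z0 n"] abs_snd_le[of "lp (zq m) n - lp z0 n"]
      by (auto simp: abs_minus_commute)
    also have "\<dots> \<le> (\<bar>of_int (fst n)\<bar> + \<bar>of_int (snd n)\<bar>) * norm (zq m - z0)" by (rule lp_lip)
    also have "\<dots> \<le> (2 * of_int N + 1) * norm (zq m - z0)"
      using n by (intro mult_right_mono) auto
    also have "\<dots> < \<delta>/2"
      using m(2) N0 by (simp add: dist_norm pos_less_divide_eq mult.commute) (simp add: algebra_simps)
    finally have "\<bar>pr (lp z0 n) - a\<bar> < \<delta>" using m(1) n(3) by (simp add: dist_real_def) (smt (verit))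
    then have "pr (lp z0 n) = a" using \<delta>(2) n(1,2) unfolding Bx_def by force
    then have "W m = a" using acond n(3) by metis
    then show False using gt by (metis less_irrefl)
  qed
  ultimately show ?thesis by simp
qed



lemma lp_tendsto: "zq \<longlonglongrightarrow> z0 \<Longrightarrow> (\<lambda>m. lp (zq m) n) \<longlonglongrightarrow> lp z0 n"
  unfolding lp_def by (intro tendsto_intros)

lemma norm4: "norm ((l, r, dn, up) :: real \<times> real \<times> real \<times> real) \<le> \<bar>l\<bar> + \<bar>r\<bar> + \<bar>dn\<bar> + \<bar>up\<bar>"
proof -
  have "norm (l, r, dn, up) \<le> norm l + norm (r, dn, up)" by (rule norm_pair_le2)
  also have "norm (r, dn, up) \<le> norm r + norm (dn, up)" by (rule norm_pair_le2)
  also have "norm (dn, up) \<le> norm dn + norm up" by (rule norm_pair_le2)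
  finally show ?thesis by simp
qed

lemma local_pierce:
  assumes a: "a > 0" and b: "b > 0" and d0: "dz z0 \<noteq> 0" and pb0: "pbox a b (LL z0)"
  shows "\<exists>e>0. \<forall>z. dist z z0 < e \<longrightarrow>
    (\<forall>n. (fst (lp z0 n) = a \<longrightarrow> fst (lp z n) = a) \<and> (snd (lp z0 n) = b \<longrightarrow> snd (lp z n) = b)) \<longrightarrow>
    pbox a b (LL z)"
proof (rule ccontr)
  define Ac where "Ac z \<longleftrightarrow> (\<forall>n. (fst (lp z0 n) = a \<longrightarrow> fst (lp z n) = a) \<and> (snd (lp z0 n) = b \<longrightarrow> snd (lp z n) = b))" for z
  assume "\<not> ?thesis"
  then have h: "\<forall>e>0. \<exists>z. dist z z0 < e \<and> Ac z \<and> \<not> pbox a b (LL z)" unfolding Ac_def by blast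
  have "\<forall>m. \<exists>z. dist z z0 < inverse (real (Suc m)) \<and> Ac z \<and> \<not> pbox a b (LL z)"
    using h by simp
  then obtain zs where zs: "\<forall>m. dist (zs m) z0 < inverse (real (Suc m)) \<and> Ac (zs m) \<and> \<not> pbox a b (LL (zs m))"
    by metis
  have lim: "zs \<longlonglongrightarrow> z0"
  proof (rule tendstoI)
    fix e :: real assume "e > 0"
    then obtain N where N: "inverse (real (Suc N)) < e" using reals_Archimedean by blast
    show "eventually (\<lambda>m. dist (zs m) z0 < e) sequentially"
      unfolding eventually_sequentially
    proof (intro exI[of _ N] allI impI)
      fix m assume "N \<le> m"
      then have "inverse (real (Suc m)) \<le> inverse (real (Suc N))" by (simp add: le_imp_inverse_le)
      moreover have "dist (zs m) z0 < inverse (real (Suc m))" using zs by blast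
      ultimately show "dist (zs m) z0 < e" using N by linarith
    qed
  qed
  define G where "G z \<longleftrightarrow> \<bar>dz z\<bar> > \<bar>dz z0\<bar> / 2 \<and> norm (fst z) < norm (fst z0) + 1 \<and> norm (snd z) < norm (snd z0) + 1" for z
  have ev1: "eventually (\<lambda>m. \<bar>dz (zs m)\<bar> > \<bar>dz z0\<bar> / 2) sequentially"
    using d0 by (intro order_tendstoD(1)[OF tendsto_rabs[OF dz_tendsto[OF lim]]]) simp
  have ev2: "eventually (\<lambda>m. norm (fst (zs m)) < norm (fst z0) + 1) sequentially"
    by (intro order_tendstoD(2)[OF tendsto_norm[OF tendsto_fst[OF lim]]]) simp
  have ev3: "eventually (\<lambda>m. norm (snd (zs m)) < norm (snd z0) + 1) sequentially"
    by (intro order_tendstoD(2)[OF tendsto_norm[OF tendsto_snd[OF lim]]]) simp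
  have "eventually (\<lambda>m. G (zs m)) sequentially"
    using eventually_conj[OF ev1 eventually_conj[OF ev2 ev3]] unfolding G_def by simp
  then obtain M0 where M0: "\<forall>m\<ge>M0. G (zs m)" by (auto simp: eventually_sequentially)
  define zt where "zt m = zs (m + M0)" for m
  have limt: "zt \<longlonglongrightarrow> z0" unfolding zt_def by (rule LIMSEQ_ignore_initial_segment[OF lim])
  have Gt: "\<forall>m. G (zt m)" "\<forall>m. Ac (zt m)" "\<forall>m. \<not> pbox a b (LL (zt m))"
    using M0 zs unfolding zt_def by auto
  define C where "C = norm (fst z0) + norm (snd z0) + 2"
  define Nn where "Nn = \<lceil>(a + b + 4) * (norm (fst z0) + norm (snd z0) + 2) / (\<bar>dz z0\<bar> / 2)\<rceil>"
  have "0 \<le> (a + b + 4) * (norm (fst z0) + norm (snd z0) + 2) / (\<bar>dz z0\<bar> / 2)"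
    using a b by (intro divide_nonneg_nonneg mult_nonneg_nonneg) auto
  then have Nn0: "Nn \<ge> 0" unfolding Nn_def using ceiling_mono ceiling_zero by metis
  define Pm where "Pm m l r dn up \<longleftrightarrow>
    \<bar>l\<bar> \<le> C + a + 1 \<and> \<bar>r\<bar> \<le> C + a + 1 \<and> \<bar>dn\<bar> \<le> C + b + 1 \<and> \<bar>up\<bar> \<le> C + b + 1 \<and>
    l + a < r \<and> dn + b < up \<and>
    (\<forall>y\<in>LL (zt m). \<not>(l < fst y \<and> fst y < r \<and> dn < snd y \<and> snd y < up)) \<and>
    (r - l \<ge> a + 1 \<or> (\<exists>n. \<bar>fst n\<bar> \<le> Nn \<and> \<bar>snd n\<bar> \<le> Nn \<and> fst (lp (zt m) n) = r - l)) \<and>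
    (up - dn \<ge> b + 1 \<or> (\<exists>n. \<bar>fst n\<bar> \<le> Nn \<and> \<bar>snd n\<bar> \<le> Nn \<and> snd (lp (zt m) n) = up - dn))" for m l r dn up
  have exq: "\<exists>q. Pm m (fst q) (fst (snd q)) (fst (snd (snd q))) (snd (snd (snd q)))" for m
  proof -
    have g: "G (zt m)" using Gt by blast
    then have dm: "dz (zt m) \<noteq> 0" unfolding G_def by auto
    have cm: "norm (fst (zt m)) + norm (snd (zt m)) \<le> C" using g unfolding G_def C_def by simp
    have cu: "\<bar>fst n\<bar> \<le> Nn \<and> \<bar>snd n\<bar> \<le> Nn" if "norm (lp (zt m) n) \<le> a + b + 4" for n
      using coeff_unif[OF d0, of "zt m" n "a + b + 4"] g that a b unfolding G_def Nn_def by auto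
    obtain l r dn up where box: "\<bar>l\<bar> \<le> norm (fst (zt m)) + norm (snd (zt m)) + a + 1 \<and> \<bar>r\<bar> \<le> norm (fst (zt m)) + norm (snd (zt m)) + a + 1 \<and>
      \<bar>dn\<bar> \<le> norm (fst (zt m)) + norm (snd (zt m)) + b + 1 \<and> \<bar>up\<bar> \<le> norm (fst (zt m)) + norm (snd (zt m)) + b + 1 \<and>
      l + a < r \<and> dn + b < up \<and>
      (\<forall>y\<in>LL (zt m). \<not>(l < fst y \<and> fst y < r \<and> dn < snd y \<and> snd y < up)) \<and>
      (r - l \<ge> a + 1 \<or> (\<exists>w\<in>LL (zt m). fst w = r - l \<and> norm w \<le> a + b + 4)) \<and>
      (up - dn \<ge> b + 1 \<or> (\<exists>w\<in>LL (zt m). snd w = up - dn \<and> norm w \<le> a + b + 4))"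
      using fail_box[OF dm a b] Gt by blast
    have W: "r - l \<ge> a + 1 \<or> (\<exists>n. \<bar>fst n\<bar> \<le> Nn \<and> \<bar>snd n\<bar> \<le> Nn \<and> fst (lp (zt m) n) = r - l)"
      using box cu LL_iff by metis
    have H: "up - dn \<ge> b + 1 \<or> (\<exists>n. \<bar>fst n\<bar> \<le> Nn \<and> \<bar>snd n\<bar> \<le> Nn \<and> snd (lp (zt m) n) = up - dn)"
      using box cu LL_iff by metis
    have "Pm m l r dn up" unfolding Pm_def using box cm W H by auto
    then show ?thesis by (intro exI[of _ "(l, r, dn, up)"]) simp
  qed
  then obtain qs where qs: "\<forall>m. Pm m (fst (qs m)) (fst (snd (qs m))) (fst (snd (snd (qs m)))) (snd (snd (snd (qs m))))"
    by metis
  define K where "K = 4 * (C + a + b + 1)"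
  have qK: "qs m \<in> cball 0 K" for m
  proof -
    obtain l r dn up where q: "qs m = (l, r, dn, up)" by (metis prod.collapse)
    have "Pm m l r dn up" using qs q by (metis fst_conv snd_conv)
    then have "\<bar>l\<bar> + \<bar>r\<bar> + \<bar>dn\<bar> + \<bar>up\<bar> \<le> K" unfolding Pm_def K_def using a b by auto
    then show ?thesis using norm4[of l r dn up] q by simp
  qed
  obtain q0 \<sigma> where sm: "strict_mono \<sigma>" and qlim: "(qs \<circ> \<sigma>) \<longlonglongrightarrow> q0"
    using compact_imp_seq_compact[OF compact_cball[of 0 K]] qK unfolding seq_compact_def by metis
  define zq where "zq = zt \<circ> \<sigma>"
  have zqlim: "zq \<longlonglongrightarrow> z0" unfolding zq_def by (rule LIMSEQ_subseq_LIMSEQ[OF limt sm])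
  define L where "L m = fst (qs (\<sigma> m))" for m
  define R where "R m = fst (snd (qs (\<sigma> m)))" for m
  define D where "D m = fst (snd (snd (qs (\<sigma> m))))" for m
  define U where "U m = snd (snd (snd (qs (\<sigma> m))))" for m
  have PmS: "Pm (\<sigma> m) (L m) (R m) (D m) (U m)" for m using qs unfolding L_def R_def D_def U_def by blast
  have Llim: "L \<longlonglongrightarrow> fst q0" unfolding L_def using tendsto_fst[OF qlim] by (simp add: comp_def)
  have Rlim: "R \<longlonglongrightarrow> fst (snd q0)" unfolding R_def using tendsto_fst[OF tendsto_snd[OF qlim]] by (simp add: comp_def)
  have Dlim: "D \<longlonglongrightarrow> fst (snd (snd q0))" unfolding D_def using tendsto_fst[OF tendsto_snd[OF tendsto_snd[OF qlim]]] by (simp add: comp_def)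
  have Ulim: "U \<longlonglongrightarrow> snd (snd (snd q0))" unfolding U_def using tendsto_snd[OF tendsto_snd[OF tendsto_snd[OF qlim]]] by (simp add: comp_def)
  define l0 where "l0 = fst q0"
  define r0 where "r0 = fst (snd q0)"
  define dn0 where "dn0 = fst (snd (snd q0))"
  define up0 where "up0 = snd (snd (snd q0))"
  have Acq: "\<forall>m. Ac (zq m)" using Gt unfolding zq_def by simp
  have Wgap: "r0 - l0 > a"
  proof (rule limit_gap[OF Nn0, of fst zq z0 "\<lambda>m. R m - L m"])
    show "fst = fst \<or> fst = snd" by simp
    show "zq \<longlonglongrightarrow> z0" by (rule zqlim)
    show "(\<lambda>m. R m - L m) \<longlonglongrightarrow> r0 - l0" unfolding r0_def l0_def by (intro tendsto_diff Rlim Llim)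
    show "\<forall>m n. fst (lp z0 n) = a \<longrightarrow> fst (lp (zq m) n) = a" using Acq unfolding Ac_def by blast
    show "\<forall>m. R m - L m > a"
    proof
      fix m have "L m + a < R m" using PmS[of m] unfolding Pm_def by blast
      then show "R m - L m > a" by simp
    qed
    show "\<forall>m. R m - L m \<ge> a + 1 \<or> (\<exists>n. \<bar>fst n\<bar> \<le> Nn \<and> \<bar>snd n\<bar> \<le> Nn \<and> fst (lp (zq m) n) = R m - L m)"
    proof
      fix m show "R m - L m \<ge> a + 1 \<or> (\<exists>n. \<bar>fst n\<bar> \<le> Nn \<and> \<bar>snd n\<bar> \<le> Nn \<and> fst (lp (zq m) n) = R m - L m)"
        using PmS[of m] unfolding Pm_def zq_def comp_def by blast
    qed
  qed
  have Hgap: "up0 - dn0 > b"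
  proof (rule limit_gap[OF Nn0, of snd zq z0 "\<lambda>m. U m - D m"])
    show "snd = fst \<or> snd = snd" by simp
    show "zq \<longlonglongrightarrow> z0" by (rule zqlim)
    show "(\<lambda>m. U m - D m) \<longlonglongrightarrow> up0 - dn0" unfolding up0_def dn0_def by (intro tendsto_diff Ulim Dlim)
    show "\<forall>m n. snd (lp z0 n) = b \<longrightarrow> snd (lp (zq m) n) = b" using Acq unfolding Ac_def by blast
    show "\<forall>m. U m - D m > b"
    proof
      fix m have "D m + b < U m" using PmS[of m] unfolding Pm_def by blast
      then show "U m - D m > b" by simp
    qed
    show "\<forall>m. U m - D m \<ge> b + 1 \<or> (\<exists>n. \<bar>fst n\<bar> \<le> Nn \<and> \<bar>snd n\<bar> \<le> Nn \<and> snd (lp (zq m) n) = U m - D m)"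
    proof
      fix m show "U m - D m \<ge> b + 1 \<or> (\<exists>n. \<bar>fst n\<bar> \<le> Nn \<and> \<bar>snd n\<bar> \<le> Nn \<and> snd (lp (zq m) n) = U m - D m)"
        using PmS[of m] unfolding Pm_def zq_def comp_def by blast
    qed
  qed
  have emp0: "\<forall>y\<in>LL z0. \<not>(l0 < fst y \<and> fst y < r0 \<and> dn0 < snd y \<and> snd y < up0)"
  proof (intro ballI notI)
    fix y assume y: "y \<in> LL z0" and inb: "l0 < fst y \<and> fst y < r0 \<and> dn0 < snd y \<and> snd y < up0"
    obtain n where n: "y = lp z0 n" using y LL_iff by blast
    have t: "(\<lambda>m. lp (zq m) n) \<longlonglongrightarrow> y" unfolding n by (rule lp_tendsto[OF zqlim])
    have e1: "eventually (\<lambda>m. fst (lp (zq m) n) - L m > 0) sequentially"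
      using inb unfolding l0_def by (intro order_tendstoD(1)[OF tendsto_diff[OF tendsto_fst[OF t] Llim]]) simp
    have e2: "eventually (\<lambda>m. R m - fst (lp (zq m) n) > 0) sequentially"
      using inb unfolding r0_def by (intro order_tendstoD(1)[OF tendsto_diff[OF Rlim tendsto_fst[OF t]]]) simp
    have e3: "eventually (\<lambda>m. snd (lp (zq m) n) - D m > 0) sequentially"
      using inb unfolding dn0_def by (intro order_tendstoD(1)[OF tendsto_diff[OF tendsto_snd[OF t] Dlim]]) simp
    have e4: "eventually (\<lambda>m. U m - snd (lp (zq m) n) > 0) sequentially"
      using inb unfolding up0_def by (intro order_tendstoD(1)[OF tendsto_diff[OF Ulim tendsto_snd[OF t]]]) simp
    obtain m where m: "fst (lp (zq m) n) - L m > 0" "R m - fst (lp (zq m) n) > 0"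
      "snd (lp (zq m) n) - D m > 0" "U m - snd (lp (zq m) n) > 0"
      using ev_ex[OF eventually_conj[OF e1 eventually_conj[OF e2 eventually_conj[OF e3 e4]]]] by blast
    have "lp (zq m) n \<in> LL (zt (\<sigma> m))" using lp_in unfolding zq_def by simp
    moreover have "\<forall>y\<in>LL (zt (\<sigma> m)). \<not>(L m < fst y \<and> fst y < R m \<and> D m < snd y \<and> snd y < U m)"
      using PmS[of m] unfolding Pm_def by blast
    ultimately show False using m by force
  qed
  define c1 where "c1 = l0 + (r0 - l0 - a) / 2"
  define c2 where "c2 = dn0 + (up0 - dn0 - b) / 2"
  obtain y where y: "y \<in> LL z0" "c1 \<le> fst y" "fst y \<le> c1 + a" "c2 \<le> snd y" "snd y \<le> c2 + b"
    using pb0 unfolding pbox_def by blast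
  have "l0 < fst y \<and> fst y < r0 \<and> dn0 < snd y \<and> snd y < up0"
    using y Wgap Hgap unfolding c1_def c2_def by (intro conjI) (simp_all add: field_simps)
  then show False using emp0 y(1) by blast
qed



definition sat :: "nat \<Rightarrow> (nat \<Rightarrow> real) \<times> real \<Rightarrow> (nat \<Rightarrow> real) \<Rightarrow> bool" where
  "sat n e x \<longleftrightarrow> (\<Sum>i<n. fst e i * x i) = snd e"

definition ratE :: "nat \<Rightarrow> (nat \<Rightarrow> real) \<times> real \<Rightarrow> bool" where
  "ratE n e \<longleftrightarrow> (\<forall>i<n. fst e i \<in> \<rat>) \<and> snd e \<in> \<rat>"

lemma rat_dense:
  "\<forall>E x \<epsilon>. (\<forall>e\<in>E. ratE n e) \<longrightarrow> (\<forall>e\<in>E. sat n e x) \<longrightarrow> \<epsilon> > 0 \<longrightarrow>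
     (\<exists>y. (\<forall>i<n. y i \<in> \<rat>) \<and> (\<forall>e\<in>E. sat n e y) \<and> (\<forall>i<n. \<bar>y i - x i\<bar> < \<epsilon>))"
proof (induction n)
  case 0
  show ?case by (auto simp: sat_def)
next
  case (Suc n)
  show ?case
  proof (intro allI impI)
    fix E x and \<epsilon> :: real
    assume rat: "\<forall>e\<in>E. ratE (Suc n) e" and sol: "\<forall>e\<in>E. sat (Suc n) e x" and ep: "\<epsilon> > 0"
    show "\<exists>y. (\<forall>i<Suc n. y i \<in> \<rat>) \<and> (\<forall>e\<in>E. sat (Suc n) e y) \<and> (\<forall>i<Suc n. \<bar>y i - x i\<bar> < \<epsilon>)"
    proof (cases "\<exists>e0\<in>E. fst e0 n \<noteq> 0")
      case True
      then obtain e0 where e0: "e0 \<in> E" "fst e0 n \<noteq> 0" by blast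
      define c0 where "c0 = fst e0"
      define d0 where "d0 = snd e0"
      define \<kappa> where "\<kappa> = c0 n"
      have k0: "\<kappa> \<noteq> 0" using e0 unfolding \<kappa>_def c0_def by simp
      define proj where "proj e = ((\<lambda>i. fst e i - (fst e n / \<kappa>) * c0 i), snd e - (fst e n / \<kappa>) * d0)" for e :: "(nat \<Rightarrow> real) \<times> real"
      have ratc0: "\<forall>i<Suc n. c0 i \<in> \<rat>" "d0 \<in> \<rat>" using rat e0 unfolding ratE_def c0_def d0_def by auto
      have rE': "\<forall>e\<in>proj ` E. ratE n e"
      proof
        fix e' assume "e' \<in> proj ` E"
        then obtain e where e: "e \<in> E" "e' = proj e" by blast
        have "\<forall>i<Suc n. fst e i \<in> \<rat>" "snd e \<in> \<rat>" using rat e(1) unfolding ratE_def by auto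
        moreover have "\<kappa> \<in> \<rat>" using ratc0 unfolding \<kappa>_def by simp
        ultimately show "ratE n e'" using ratc0 unfolding e(2) proj_def ratE_def by auto
      qed
      have e0x: "(\<Sum>i<n. c0 i * x i) + \<kappa> * x n = d0"
        using sol e0 unfolding sat_def c0_def d0_def \<kappa>_def by simp
      have projsat: "sat n (proj e) z" if "e \<in> E" "sat (Suc n) e z" "(\<Sum>i<n. c0 i * z i) + \<kappa> * z n = d0" for e z
      proof -
        have s: "(\<Sum>i<n. fst e i * z i) + fst e n * z n = snd e" using that(2) unfolding sat_def by simp
        have "(\<Sum>i<n. (fst e i - (fst e n / \<kappa>) * c0 i) * z i)
            = (\<Sum>i<n. fst e i * z i) - (fst e n / \<kappa>) * (\<Sum>i<n. c0 i * z i)"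
          by (simp add: sum_subtractf sum_distrib_left algebra_simps)
        also have "\<dots> = snd e - (fst e n / \<kappa>) * d0"
        proof -
          have "(\<Sum>i<n. c0 i * z i) = d0 - \<kappa> * z n" using that(3) by simp
          then have "(fst e n / \<kappa>) * (\<Sum>i<n. c0 i * z i) = (fst e n / \<kappa>) * (d0 - \<kappa> * z n)" by simp
          also have "\<dots> = (fst e n / \<kappa>) * d0 - fst e n * z n" using k0 by (simp add: field_simps)
          finally have "(fst e n / \<kappa>) * (\<Sum>i<n. c0 i * z i) = (fst e n / \<kappa>) * d0 - fst e n * z n" .
          then show ?thesis using s by simp
        qed
        finally show ?thesis unfolding sat_def proj_def by simp
      qed
      have solE': "\<forall>e\<in>proj ` E. sat n e x"
      proof
        fix e' assume "e' \<in> proj ` E"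
        then obtain e where "e \<in> E" "e' = proj e" by blast
        then show "sat n e' x" using projsat[of e x] sol e0x by blast
      qed
      define K where "K = (\<Sum>i<n. \<bar>c0 i / \<kappa>\<bar>)"
      have K0: "K \<ge> 0" unfolding K_def by (simp add: sum_nonneg)
      define \<epsilon>' where "\<epsilon>' = \<epsilon> / (K + 1)"
      have ep': "\<epsilon>' > 0" "\<epsilon>' \<le> \<epsilon>" "K * \<epsilon>' < \<epsilon>" using ep K0 unfolding \<epsilon>'_def
        by (auto simp: field_simps)
      obtain y' where y': "\<forall>i<n. y' i \<in> \<rat>" "\<forall>e\<in>proj ` E. sat n e y'" "\<forall>i<n. \<bar>y' i - x i\<bar> < \<epsilon>'"
        using spec[OF spec[OF spec[OF Suc.IH, of "proj ` E"], of x], of \<epsilon>'] rE' solE' ep'(1) by blast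
      define y where "y = y'(n := (d0 - (\<Sum>i<n. c0 i * y' i)) / \<kappa>)"
      have yl: "y i = y' i" if "i < n" for i using that unfolding y_def by simp
      have sy: "(\<Sum>i<n. c0 i * y i) = (\<Sum>i<n. c0 i * y' i)" using yl by (intro sum.cong) auto
      have yn: "(\<Sum>i<n. c0 i * y i) + \<kappa> * y n = d0" using k0 sy unfolding y_def by simp
      have ratY: "\<forall>i<Suc n. y i \<in> \<rat>"
      proof (intro allI impI)
        fix i assume "i < Suc n"
        show "y i \<in> \<rat>"
        proof (cases "i = n")
          case True
          have "(\<Sum>i<n. c0 i * y' i) \<in> \<rat>" using ratc0 y'(1) by (intro Rats_sum) auto
          moreover have "\<kappa> \<in> \<rat>" using ratc0 unfolding \<kappa>_def by simp
          ultimately show ?thesis using True ratc0 unfolding y_def by simp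
        next
          case False
          then show ?thesis using y'(1) \<open>i < Suc n\<close> unfolding y_def by simp
        qed
      qed
      have satY: "\<forall>e\<in>E. sat (Suc n) e y"
      proof
        fix e assume e: "e \<in> E"
        have "(\<Sum>i<n. fst (proj e) i * y i) = (\<Sum>i<n. fst (proj e) i * y' i)" by (intro sum.cong) (auto simp: yl)
        moreover have "sat n (proj e) y'" using y'(2) e by blast
        ultimately have sp: "sat n (proj e) y" unfolding sat_def by simp
        have "(\<Sum>i<n. (fst e i - (fst e n / \<kappa>) * c0 i) * y i) = snd e - (fst e n / \<kappa>) * d0"
          using sp unfolding sat_def proj_def by simp
        then have "(\<Sum>i<n. fst e i * y i) - (fst e n / \<kappa>) * (\<Sum>i<n. c0 i * y i) = snd e - (fst e n / \<kappa>) * d0"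
          by (simp add: sum_subtractf sum_distrib_left algebra_simps)
        moreover have "fst e n * y n = (fst e n / \<kappa>) * (d0 - (\<Sum>i<n. c0 i * y i))"
        proof -
          have "fst e n * y n = (fst e n / \<kappa>) * (\<kappa> * y n)" using k0 by simp
          also have "\<kappa> * y n = d0 - (\<Sum>i<n. c0 i * y i)" using yn by simp
          finally show ?thesis .
        qed
        ultimately have "(\<Sum>i<n. fst e i * y i) + fst e n * y n = snd e" by (simp add: algebra_simps)
        then show "sat (Suc n) e y" unfolding sat_def by simp
      qed
      have closeY: "\<forall>i<Suc n. \<bar>y i - x i\<bar> < \<epsilon>"
      proof (intro allI impI)
        fix i assume i: "i < Suc n"
        show "\<bar>y i - x i\<bar> < \<epsilon>"
        proof (cases "i = n")
          case False
          then have "i < n" using i by simp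
          then show ?thesis using y'(3) ep'(2) yl[of i] by force
        next
          case True
          have "y n - x n = (\<Sum>i<n. (c0 i / \<kappa>) * (x i - y i))"
          proof -
            have "y n = (d0 - (\<Sum>i<n. c0 i * y i)) / \<kappa>" using yn k0 by (simp add: field_simps)
            moreover have "x n = (d0 - (\<Sum>i<n. c0 i * x i)) / \<kappa>" using e0x k0 by (simp add: field_simps)
            ultimately have "y n - x n = ((\<Sum>i<n. c0 i * x i) - (\<Sum>i<n. c0 i * y i)) / \<kappa>"
              by (simp add: diff_divide_distrib)
            also have "\<dots> = (\<Sum>i<n. (c0 i / \<kappa>) * (x i - y i))"
              by (simp add: sum_subtractf[symmetric] sum_divide_distrib algebra_simps diff_divide_distrib)
            finally show ?thesis .
          qed
          then have "\<bar>y n - x n\<bar> \<le> (\<Sum>i<n. \<bar>c0 i / \<kappa>\<bar> * \<bar>x i - y i\<bar>)"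
            using sum_abs[of "\<lambda>i. (c0 i / \<kappa>) * (x i - y i)" "{..<n}"] by (simp add: abs_mult)
          also have "\<dots> \<le> (\<Sum>i<n. \<bar>c0 i / \<kappa>\<bar> * \<epsilon>')"
            using y'(3) yl by (intro sum_mono mult_left_mono) (auto simp: abs_minus_commute less_imp_le)
          also have "\<dots> = K * \<epsilon>'" unfolding K_def by (simp add: sum_distrib_right)
          also have "\<dots> < \<epsilon>" by (rule ep'(3))
          finally show ?thesis using True by simp
        qed
      qed
      show ?thesis using ratY satY closeY by blast
    next
      case False
      then have zeroN: "\<forall>e\<in>E. fst e n = 0" by blast
      have eqsat: "sat (Suc n) e z \<longleftrightarrow> sat n e z" if "e \<in> E" for e z
        using zeroN that unfolding sat_def by simp
      have rE: "\<forall>e\<in>E. ratE n e" using rat unfolding ratE_def by auto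
      obtain y' where y': "\<forall>i<n. y' i \<in> \<rat>" "\<forall>e\<in>E. sat n e y'" "\<forall>i<n. \<bar>y' i - x i\<bar> < \<epsilon>"
      proof -
        have "\<forall>e\<in>E. sat n e x" using sol eqsat by blast
        then show ?thesis using spec[OF spec[OF spec[OF Suc.IH, of E], of x], of \<epsilon>] rE ep that by blast
      qed
      obtain q where q: "q \<in> \<rat>" "x n - \<epsilon> < q" "q < x n + \<epsilon>"
        using Rats_dense_in_real[of "x n - \<epsilon>" "x n + \<epsilon>"] ep by auto
      define y where "y = y'(n := q)"
      have "\<forall>i<Suc n. y i \<in> \<rat>" using y'(1) q unfolding y_def by (auto simp: less_Suc_eq)
      moreover have "\<forall>e\<in>E. sat (Suc n) e y"
      proof
        fix e assume e: "e \<in> E"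
        have "sat n e y" using y'(2) e unfolding sat_def y_def by simp
        then show "sat (Suc n) e y" using eqsat e by blast
      qed
      moreover have "\<forall>i<Suc n. \<bar>y i - x i\<bar> < \<epsilon>" using y'(3) q unfolding y_def by (auto simp: less_Suc_eq)
      ultimately show ?thesis by blast
    qed
  qed
qed



definition tox :: "pt \<times> pt \<Rightarrow> nat \<Rightarrow> real" where
  "tox z = (\<lambda>i. if i = 0 then fst (fst z) else if i = 1 then snd (fst z) else if i = 2 then fst (snd z) else snd (snd z))"

definition ofx :: "(nat \<Rightarrow> real) \<Rightarrow> pt \<times> pt" where
  "ofx x = ((x 0, x 1), (x 2, x 3))"

lemma ofx_tox[simp]: "ofx (tox z) = z"
  by (simp add: ofx_def tox_def)

lemma sum4: "(\<Sum>i<(4::nat). f i) = f 0 + f 1 + f 2 + (f 3 :: real)"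
  by (simp add: eval_nat_numeral)

definition eqX :: "int \<times> int \<Rightarrow> real \<Rightarrow> (nat \<Rightarrow> real) \<times> real" where
  "eqX n c = ((\<lambda>i. if i = 0 then of_int (fst n) else if i = 2 then of_int (snd n) else 0), c)"
definition eqY :: "int \<times> int \<Rightarrow> real \<Rightarrow> (nat \<Rightarrow> real) \<times> real" where
  "eqY n c = ((\<lambda>i. if i = 1 then of_int (fst n) else if i = 3 then of_int (snd n) else 0), c)"

definition bil :: "pt \<times> pt \<Rightarrow> pt \<times> pt \<Rightarrow> real" where
  "bil z w = det2 (fst z) (snd w) + det2 (fst w) (snd z)"

definition eqB :: "pt \<times> pt \<Rightarrow> (nat \<Rightarrow> real) \<times> real" where
  "eqB w = ((\<lambda>i. if i = 0 then snd (snd w) else if i = 1 then - fst (snd w) else if i = 2 then - snd (fst w) else fst (fst w)), 0)"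

lemma sat_eqX: "sat 4 (eqX n c) x \<longleftrightarrow> fst (lp (ofx x) n) = c"
  by (simp add: sat_def eqX_def sum4 lp_def ofx_def)
lemma sat_eqY: "sat 4 (eqY n c) x \<longleftrightarrow> snd (lp (ofx x) n) = c"
  by (simp add: sat_def eqY_def sum4 lp_def ofx_def)
lemma sat_eqB: "sat 4 (eqB w) x \<longleftrightarrow> bil (ofx x) w = 0"
  by (simp add: sat_def eqB_def sum4 bil_def ofx_def det2_def algebra_simps)

lemma sat_hom: "sat 4 (fst e, 0) x \<longleftrightarrow> (\<Sum>i<4. fst e i * x i) = 0"
  by (simp add: sat_def)

lemma lp_lin: "lp (z + t *\<^sub>R w) n = lp z n + t *\<^sub>R lp w n"
  by (simp add: lp_def algebra_simps)

lemma lp_minus: "lp (z - w) n = lp z n - lp w n"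
  by (simp add: lp_def algebra_simps)

lemma dz_expand: "dz (z + s *\<^sub>R w) = dz z + s * bil z w + s^2 * dz w"
  by (simp add: dz_def bil_def det2_def algebra_simps power2_eq_square)

lemma bil_self: "bil w w = 2 * dz w"
  by (simp add: dz_def bil_def det2_def algebra_simps)

lemma bil_diff1: "bil (z - z') w = bil z w - bil z' w"
  by (simp add: bil_def det2_def algebra_simps)
lemma bil_diff2: "bil w (z - z') = bil w z - bil w z'"
  by (simp add: bil_def det2_def algebra_simps)

lemma bil_bound:
  assumes "\<forall>i<4. \<bar>tox e i\<bar> < \<eta>"
  shows "\<bar>bil w e\<bar> \<le> (\<bar>tox w 0\<bar> + \<bar>tox w 1\<bar> + \<bar>tox w 2\<bar> + \<bar>tox w 3\<bar>) * \<eta>"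
proof -
  have h: "\<bar>fst (fst e)\<bar> \<le> \<eta>" "\<bar>snd (fst e)\<bar> \<le> \<eta>" "\<bar>fst (snd e)\<bar> \<le> \<eta>" "\<bar>snd (snd e)\<bar> \<le> \<eta>"
    using assms[rule_format, of 0] assms[rule_format, of 1] assms[rule_format, of 2] assms[rule_format, of 3]
    by (auto simp: tox_def)
  have "\<bar>bil w e\<bar> \<le> \<bar>fst (fst w)\<bar> * \<bar>snd (snd e)\<bar> + \<bar>snd (fst w)\<bar> * \<bar>fst (snd e)\<bar>
      + \<bar>fst (fst e)\<bar> * \<bar>snd (snd w)\<bar> + \<bar>snd (fst e)\<bar> * \<bar>fst (snd w)\<bar>"
    unfolding bil_def det2_def by (simp add: abs_mult[symmetric])
  also have "\<dots> \<le> \<bar>fst (fst w)\<bar> * \<eta> + \<bar>snd (fst w)\<bar> * \<eta> + \<eta> * \<bar>snd (snd w)\<bar> + \<eta> * \<bar>fst (snd w)\<bar>"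
    using h by (intro add_mono mult_left_mono mult_right_mono) auto
  finally show ?thesis by (simp add: tox_def algebra_simps)
qed

lemma norm_ofx_le: "norm (ofx x - z) \<le> \<bar>x 0 - tox z 0\<bar> + \<bar>x 1 - tox z 1\<bar> + \<bar>x 2 - tox z 2\<bar> + \<bar>x 3 - tox z 3\<bar>"
proof -
  have e: "ofx x - z = (fst (ofx x - z), snd (ofx x - z))" by (rule prod.collapse[symmetric])
  have "norm (ofx x - z) \<le> norm (fst (ofx x - z)) + norm (snd (ofx x - z))"
    by (subst e) (rule norm_pair_le2)
  also have "norm (fst (ofx x - z)) \<le> \<bar>x 0 - tox z 0\<bar> + \<bar>x 1 - tox z 1\<bar>"
    using norm_pt_le[of "fst (ofx x - z)"] by (simp add: ofx_def tox_def)
  also have "norm (snd (ofx x - z)) \<le> \<bar>x 2 - tox z 2\<bar> + \<bar>x 3 - tox z 3\<bar>"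
    using norm_pt_le[of "snd (ofx x - z)"] by (simp add: ofx_def tox_def)
  finally show ?thesis by simp
qed

lemma small_lin:
  assumes "s0 > 0" "\<forall>s. \<bar>s\<bar> < s0 \<longrightarrow> s * b + s^2 * q \<le> (0::real)"
  shows "b = 0"
proof (rule ccontr)
  assume b: "b \<noteq> 0"
  define t where "t = min (s0/2) (\<bar>b\<bar> / (2 * (\<bar>q\<bar> + 1)))"
  have t0: "t > 0" using assms b unfolding t_def by simp
  have ts: "t < s0" using assms unfolding t_def by simp
  have tq: "t * \<bar>q\<bar> < \<bar>b\<bar>"
  proof -
    have "t * \<bar>q\<bar> \<le> (\<bar>b\<bar> / (2 * (\<bar>q\<bar> + 1))) * \<bar>q\<bar>" unfolding t_def by (intro mult_right_mono) auto
    also have "\<dots> \<le> \<bar>b\<bar> / 2" by (simp add: field_simps)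
    also have "\<dots> < \<bar>b\<bar>" using b by simp
    finally show ?thesis .
  qed
  define s where "s = sgn b * t"
  have "\<bar>s\<bar> < s0" using t0 ts b unfolding s_def by (simp add: abs_mult)
  then have "s * b + s^2 * q \<le> 0" using assms by blast
  moreover have "s * b = t * \<bar>b\<bar>" unfolding s_def by (simp add: sgn_mult_abs mult.commute mult.left_commute abs_sgn)
  moreover have "s^2 = t^2"
  proof -
    have "\<bar>s\<bar> = t" using t0 b unfolding s_def by (simp add: abs_mult)
    then show ?thesis by (metis power2_abs)
  qed
  ultimately have "t * \<bar>b\<bar> + t^2 * q \<le> 0" by simp
  then have "t * (\<bar>b\<bar> + t * q) \<le> 0" by (simp add: algebra_simps power2_eq_square)
  then have "\<bar>b\<bar> + t * q \<le> 0" using t0 by (simp add: mult_le_0_iff)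
  moreover have "t * q \<ge> - (t * \<bar>q\<bar>)" using mult_left_mono[of "-\<bar>q\<bar>" q t] t0 by simp
  ultimately show False using tq by linarith
qed



lemma LL_swap: "lattice v u = lattice u v"
  unfolding lattice_def by (auto simp: add.commute) (metis add.commute)+

lemma finite_eps:
  assumes "finite F" "\<forall>R\<in>F. \<exists>e>0. \<forall>z. dist z z0 < e \<longrightarrow> P R z"
  shows "\<exists>e>0. \<forall>R\<in>F. \<forall>z. dist z z0 < e \<longrightarrow> P R z"
  using assms
proof (induction F rule: finite_induct)
  case empty
  then show ?case by (intro exI[of _ 1]) auto
next
  case (insert R F)
  then obtain e1 where e1: "e1 > 0" "\<forall>R\<in>F. \<forall>z. dist z z0 < e1 \<longrightarrow> P R z" by auto
  obtain e2 where e2: "e2 > 0" "\<forall>z. dist z z0 < e2 \<longrightarrow> P R z" using insert.prems by auto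
  show ?case using e1 e2 by (intro exI[of _ "min e1 e2"]) auto
qed

lemma opt_exists:
  fixes wid hei :: "pt set \<Rightarrow> real"
  assumes fin: "finite F" and ne: "F \<noteq> {}" and pos: "\<forall>R\<in>F. wid R > 0 \<and> hei R > 0"
  shows "\<exists>zo. dz zo > 0 \<and> (\<forall>R\<in>F. pbox (wid R) (hei R) (LL zo)) \<and>
     (\<forall>z. dz z \<noteq> 0 \<and> (\<forall>R\<in>F. pbox (wid R) (hei R) (LL z)) \<longrightarrow> \<bar>dz z\<bar> \<le> dz zo)"
proof -
  define PF where "PF z \<longleftrightarrow> (\<forall>R\<in>F. pbox (wid R) (hei R) (LL z))" for z
  define amin where "amin = Min (wid ` F)"
  define bmin where "bmin = Min (hei ` F)"
  have am: "amin > 0" "\<forall>R\<in>F. amin \<le> wid R"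
    using Min_in[of "wid ` F"] fin ne pos unfolding amin_def by auto
  have bm: "bmin > 0" "\<forall>R\<in>F. bmin \<le> hei R"
    using Min_in[of "hei ` F"] fin ne pos unfolding bmin_def by auto
  define z1 :: "pt \<times> pt" where "z1 = ((amin, 0), (0, bmin))"
  have dz1: "dz z1 = amin * bmin" unfolding z1_def dz_def det2_def by simp
  have PF1: "PF z1" unfolding PF_def pbox_def
  proof (intro ballI allI)
    fix R c1 c2 assume R: "R \<in> F"
    define y where "y = lp z1 (\<lceil>c1 / amin\<rceil>, \<lceil>c2 / bmin\<rceil>)"
    have fy: "fst y = of_int \<lceil>c1 / amin\<rceil> * amin" "snd y = of_int \<lceil>c2 / bmin\<rceil> * bmin"
      unfolding y_def lp_def z1_def by simp_all
    have x1: "c1 \<le> fst y" "fst y \<le> c1 + amin"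
    proof -
      have "c1 / amin \<le> of_int \<lceil>c1 / amin\<rceil>" by (rule le_of_int_ceiling)
      then have "(c1 / amin) * amin \<le> of_int \<lceil>c1 / amin\<rceil> * amin" using am by (intro mult_right_mono) auto
      then show "c1 \<le> fst y" using am fy by simp
      have "of_int \<lceil>c1 / amin\<rceil> < c1 / amin + 1" using ceiling_correct[of "c1 / amin"] by linarith
      then have "of_int \<lceil>c1 / amin\<rceil> * amin \<le> (c1 / amin + 1) * amin" using am by (intro mult_right_mono) auto
      moreover have "(c1 / amin + 1) * amin = c1 + amin" using am by (simp add: distrib_right)
      ultimately show "fst y \<le> c1 + amin" using fy by simp
    qed
    have x2: "c2 \<le> snd y" "snd y \<le> c2 + bmin"
    proof -
      have "c2 / bmin \<le> of_int \<lceil>c2 / bmin\<rceil>" by (rule le_of_int_ceiling)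
      then have "(c2 / bmin) * bmin \<le> of_int \<lceil>c2 / bmin\<rceil> * bmin" using bm by (intro mult_right_mono) auto
      then show "c2 \<le> snd y" using bm fy by simp
      have "of_int \<lceil>c2 / bmin\<rceil> < c2 / bmin + 1" using ceiling_correct[of "c2 / bmin"] by linarith
      then have "of_int \<lceil>c2 / bmin\<rceil> * bmin \<le> (c2 / bmin + 1) * bmin" using bm by (intro mult_right_mono) auto
      moreover have "(c2 / bmin + 1) * bmin = c2 + bmin" using bm by (simp add: distrib_right)
      ultimately show "snd y \<le> c2 + bmin" using fy by simp
    qed
    show "\<exists>y\<in>LL z1. c1 \<le> fst y \<and> fst y \<le> c1 + wid R \<and> c2 \<le> snd y \<and> snd y \<le> c2 + hei R"
      using x1 x2 am(2) bm(2) R lp_in[of z1] unfolding y_def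
      by (intro bexI[of _ y]) (auto simp: y_def intro: order_trans)
  qed
  obtain R0 where R0: "R0 \<in> F" using ne by blast
  define s where "s = wid R0 + hei R0"
  have s0: "s > 0" unfolding s_def using pos R0 by (simp add: add_pos_pos)
  have cov: "\<forall>x. \<exists>y\<in>LL z. norm (y - x) \<le> s" if "PF z" for z
    using cover_pbox[of "wid R0" "hei R0" "LL z"] that R0 pos unfolding PF_def s_def by auto
  define \<delta>0 where "\<delta>0 = amin * bmin"
  have d0: "\<delta>0 > 0" unfolding \<delta>0_def using am bm by simp
  define Ps where "Ps = {z. norm (fst z) \<le> 4 * s \<and> norm (snd z) \<le> 4 * s \<and> \<bar>dz z\<bar> \<ge> \<delta>0 \<and> PF z}"
  have bdd: "bounded Ps"
  proof (rule bounded_subset[OF bounded_cball[of 0 "8 * s"]])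
    show "Ps \<subseteq> cball 0 (8 * s)"
    proof
      fix z assume "z \<in> Ps"
      then have "norm (fst z) \<le> 4 * s" "norm (snd z) \<le> 4 * s" unfolding Ps_def by auto
      moreover have "norm z \<le> norm (fst z) + norm (snd z)"
        using norm_pair_le2[of "fst z" "snd z"] by simp
      ultimately show "z \<in> cball 0 (8 * s)" by simp
    qed
  qed
  have cl: "closed Ps"
    unfolding closed_sequential_limits
  proof (intro allI impI, elim conjE)
    fix xs l assume xs: "\<forall>n. xs n \<in> Ps" and lim: "xs \<longlonglongrightarrow> l"
    have a1: "norm (fst l) \<le> 4 * s"
      using xs unfolding Ps_def by (intro LIMSEQ_le_const2[OF tendsto_norm[OF tendsto_fst[OF lim]]]) auto
    have a2: "norm (snd l) \<le> 4 * s"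
      using xs unfolding Ps_def by (intro LIMSEQ_le_const2[OF tendsto_norm[OF tendsto_snd[OF lim]]]) auto
    have a3: "\<bar>dz l\<bar> \<ge> \<delta>0"
      using xs unfolding Ps_def by (intro LIMSEQ_le_const[OF tendsto_rabs[OF dz_tendsto[OF lim]]]) auto
    have dl: "dz l \<noteq> 0" using a3 d0 by auto
    have a4: "PF l" unfolding PF_def
    proof
      fix R assume R: "R \<in> F"
      show "pbox (wid R) (hei R) (LL l)"
        using pbox_limit[OF lim dl, of "wid R" "hei R"] xs R pos unfolding Ps_def PF_def
        by (auto intro: less_imp_le)
    qed
    show "l \<in> Ps" unfolding Ps_def using a1 a2 a3 a4 by simp
  qed
  have cpt: "compact Ps" using bdd cl by (simp add: compact_eq_bounded_closed)
  obtain z1' where z1': "LL z1' = LL z1" "dz z1' \<noteq> 0" "norm (fst z1') \<le> 4 * s" "norm (snd z1') \<le> 4 * s"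
    using reduced_basis[of z1 s] dz1 am bm s0 cov[OF PF1] by auto
  have "\<bar>dz z1'\<bar> = \<bar>dz z1\<bar>" using det_inv[of z1 z1'] z1' dz1 am bm by simp
  then have "z1' \<in> Ps" unfolding Ps_def PF_def using z1' PF1 dz1 am bm unfolding PF_def \<delta>0_def by simp
  then have nePs: "Ps \<noteq> {}" by blast
  have cont: "continuous_on Ps (\<lambda>z. \<bar>dz z\<bar>)"
    unfolding dz_def det2_def by (intro continuous_intros)
  obtain zm where zm: "zm \<in> Ps" "\<forall>y\<in>Ps. \<bar>dz y\<bar> \<le> \<bar>dz zm\<bar>"
    using continuous_attains_sup[OF cpt nePs cont] by blast
  have opt: "\<bar>dz z\<bar> \<le> \<bar>dz zm\<bar>" if hz: "dz z \<noteq> 0" and pz: "PF z" for z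
  proof (cases "\<bar>dz z\<bar> < \<delta>0")
    case True
    then show ?thesis using zm(1) unfolding Ps_def by auto
  next
    case False
    obtain z' where z': "LL z' = LL z" "dz z' \<noteq> 0" "norm (fst z') \<le> 4 * s" "norm (snd z') \<le> 4 * s"
      using reduced_basis[OF hz s0 cov[OF pz]] by blast
    have "\<bar>dz z'\<bar> = \<bar>dz z\<bar>" using det_inv[OF hz z'(2) z'(1)] .
    moreover have "PF z'" using pz z'(1) unfolding PF_def by simp
    ultimately have "z' \<in> Ps" unfolding Ps_def using z' False by simp
    then show ?thesis using zm(2) \<open>\<bar>dz z'\<bar> = \<bar>dz z\<bar>\<close> by metis
  qed
  have dzm: "dz zm \<noteq> 0" using zm(1) d0 unfolding Ps_def by auto
  have PFm: "PF zm" using zm(1) unfolding Ps_def by simp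
  show ?thesis
  proof (cases "dz zm > 0")
    case True
    then show ?thesis using PFm opt unfolding PF_def by (intro exI[of _ zm]) auto
  next
    case False
    define zo where "zo = (snd zm, fst zm)"
    have "dz zo = - dz zm" unfolding zo_def dz_def det2_def by simp
    moreover have "LL zo = LL zm" unfolding zo_def by (simp add: LL_swap)
    ultimately show ?thesis using PFm opt False dzm unfolding PF_def
      by (intro exI[of _ zo]) auto
  qed
qed



lemma tox_ofx: "i < 4 \<Longrightarrow> tox (ofx x) i = x i"
  by (auto simp: tox_def ofx_def less_Suc_eq numeral_eq_Suc)

lemma ratE_eqX: "c \<in> \<rat> \<Longrightarrow> ratE 4 (eqX n c)"
  by (auto simp: ratE_def eqX_def)
lemma ratE_eqY: "c \<in> \<rat> \<Longrightarrow> ratE 4 (eqY n c)"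
  by (auto simp: ratE_def eqY_def)
lemma ratE_eqB: "\<forall>i<4. tox w i \<in> \<rat> \<Longrightarrow> ratE 4 (eqB w)"
proof -
  assume h: "\<forall>i<4. tox w i \<in> \<rat>"
  have "fst (fst w) \<in> \<rat>" "snd (fst w) \<in> \<rat>" "fst (snd w) \<in> \<rat>" "snd (snd w) \<in> \<rat>"
    using h[rule_format, of 0] h[rule_format, of 1] h[rule_format, of 2] h[rule_format, of 3]
    by (auto simp: tox_def)
  then show ?thesis by (auto simp: ratE_def eqB_def)
qed

lemma rational_opt:
  fixes wid hei :: "pt set \<Rightarrow> real"
  assumes fin: "finite F" and pos: "\<forall>R\<in>F. wid R > 0 \<and> hei R > 0 \<and> wid R \<in> \<rat> \<and> hei R \<in> \<rat>"
    and dzo: "dz zo > 0" and PFo: "\<forall>R\<in>F. pbox (wid R) (hei R) (LL zo)"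
    and opt: "\<forall>z. dz z \<noteq> 0 \<and> (\<forall>R\<in>F. pbox (wid R) (hei R) (LL z)) \<longrightarrow> \<bar>dz z\<bar> \<le> dz zo"
  shows "\<exists>zr. dz zr = dz zo \<and> (\<forall>R\<in>F. pbox (wid R) (hei R) (LL zr)) \<and>
     fst (fst zr) \<in> \<rat> \<and> snd (fst zr) \<in> \<rat> \<and> fst (snd zr) \<in> \<rat> \<and> snd (snd zr) \<in> \<rat>"
proof -
  define PF where "PF z \<longleftrightarrow> (\<forall>R\<in>F. pbox (wid R) (hei R) (LL z))" for z
  define Aall where "Aall z \<longleftrightarrow> (\<forall>R\<in>F. \<forall>n. (fst (lp zo n) = wid R \<longrightarrow> fst (lp z n) = wid R) \<and>
      (snd (lp zo n) = hei R \<longrightarrow> snd (lp z n) = hei R))" for z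
  define V0 where "V0 z \<longleftrightarrow> (\<forall>R\<in>F. \<forall>n. (fst (lp zo n) = wid R \<longrightarrow> fst (lp z n) = 0) \<and>
      (snd (lp zo n) = hei R \<longrightarrow> snd (lp z n) = 0))" for z
  define EA where "EA = {eqX n (wid R) | n R. R \<in> F \<and> fst (lp zo n) = wid R} \<union>
      {eqY n (hei R) | n R. R \<in> F \<and> snd (lp zo n) = hei R}"
  define E0 where "E0 = {eqX n 0 | n R. R \<in> F \<and> fst (lp zo n) = wid R} \<union>
      {eqY n 0 | n R. R \<in> F \<and> snd (lp zo n) = hei R}"
  have satEA: "(\<forall>e\<in>EA. sat 4 e x) \<longleftrightarrow> Aall (ofx x)" for x
  proof
    assume H: "\<forall>e\<in>EA. sat 4 e x"
    show "Aall (ofx x)" unfolding Aall_def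
    proof (intro ballI allI conjI impI)
      fix R n assume "R \<in> F" "fst (lp zo n) = wid R"
      then have "eqX n (wid R) \<in> EA" unfolding EA_def by blast
      then show "fst (lp (ofx x) n) = wid R" using H sat_eqX by blast
    next
      fix R n assume "R \<in> F" "snd (lp zo n) = hei R"
      then have "eqY n (hei R) \<in> EA" unfolding EA_def by blast
      then show "snd (lp (ofx x) n) = hei R" using H sat_eqY by blast
    qed
  next
    assume H: "Aall (ofx x)"
    show "\<forall>e\<in>EA. sat 4 e x"
    proof
      fix e assume "e \<in> EA"
      then consider n R where "R \<in> F" "fst (lp zo n) = wid R" "e = eqX n (wid R)"
        | n R where "R \<in> F" "snd (lp zo n) = hei R" "e = eqY n (hei R)" unfolding EA_def by blast
      then show "sat 4 e x"
      proof cases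
        case 1
        then have "fst (lp (ofx x) n) = wid R" using H unfolding Aall_def by blast
        then show ?thesis using 1 by (simp only: sat_eqX)
      next
        case 2
        then have "snd (lp (ofx x) n) = hei R" using H unfolding Aall_def by blast
        then show ?thesis using 2 by (simp only: sat_eqY)
      qed
    qed
  qed
  have satE0: "(\<forall>e\<in>E0. sat 4 e x) \<longleftrightarrow> V0 (ofx x)" for x
  proof
    assume H: "\<forall>e\<in>E0. sat 4 e x"
    show "V0 (ofx x)" unfolding V0_def
    proof (intro ballI allI conjI impI)
      fix R n assume "R \<in> F" "fst (lp zo n) = wid R"
      then have "eqX n (0) \<in> E0" unfolding E0_def by blast
      then show "fst (lp (ofx x) n) = 0" using H sat_eqX by blast
    next
      fix R n assume "R \<in> F" "snd (lp zo n) = hei R"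
      then have "eqY n (0) \<in> E0" unfolding E0_def by blast
      then show "snd (lp (ofx x) n) = 0" using H sat_eqY by blast
    qed
  next
    assume H: "V0 (ofx x)"
    show "\<forall>e\<in>E0. sat 4 e x"
    proof
      fix e assume "e \<in> E0"
      then consider n R where "R \<in> F" "fst (lp zo n) = wid R" "e = eqX n (0)"
        | n R where "R \<in> F" "snd (lp zo n) = hei R" "e = eqY n (0)" unfolding E0_def by blast
      then show "sat 4 e x"
      proof cases
        case 1
        then have "fst (lp (ofx x) n) = 0" using H unfolding V0_def by blast
        then show ?thesis using 1 by (simp only: sat_eqX)
      next
        case 2
        then have "snd (lp (ofx x) n) = 0" using H unfolding V0_def by blast
        then show ?thesis using 2 by (simp only: sat_eqY)
      qed
    qed
  qed
  have ratEA: "\<forall>e\<in>EA. ratE 4 e" unfolding EA_def using pos by (blast intro: ratE_eqX ratE_eqY)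
  have ratE0: "\<forall>e\<in>E0. ratE 4 e" unfolding E0_def by (blast intro: ratE_eqX ratE_eqY Rats_0)
  have loc: "\<forall>R\<in>F. \<exists>e>0. \<forall>z. dist z zo < e \<longrightarrow>
      ((\<forall>n. (fst (lp zo n) = wid R \<longrightarrow> fst (lp z n) = wid R) \<and> (snd (lp zo n) = hei R \<longrightarrow> snd (lp z n) = hei R))
        \<longrightarrow> pbox (wid R) (hei R) (LL z))"
  proof
    fix R assume R: "R \<in> F"
    show "\<exists>e>0. \<forall>z. dist z zo < e \<longrightarrow>
      ((\<forall>n. (fst (lp zo n) = wid R \<longrightarrow> fst (lp z n) = wid R) \<and> (snd (lp zo n) = hei R \<longrightarrow> snd (lp z n) = hei R))
        \<longrightarrow> pbox (wid R) (hei R) (LL z))"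
      using local_pierce[of "wid R" "hei R" zo] pos R PFo dzo by auto
  qed
  obtain \<epsilon> where \<epsilon>: "\<epsilon> > 0" "\<forall>R\<in>F. \<forall>z. dist z zo < \<epsilon> \<longrightarrow>
      ((\<forall>n. (fst (lp zo n) = wid R \<longrightarrow> fst (lp z n) = wid R) \<and> (snd (lp zo n) = hei R \<longrightarrow> snd (lp z n) = hei R))
        \<longrightarrow> pbox (wid R) (hei R) (LL z))"
    using finite_eps[OF fin loc] by blast
  have nbhd: "PF z" if "dist z zo < \<epsilon>" "Aall z" for z
    using \<epsilon>(2) that unfolding PF_def Aall_def by blast
  have crit: "bil zo w = 0" if vw: "V0 w" for w
  proof (rule small_lin)
    define s0 where "s0 = \<epsilon> / (norm w + 1)"
    show "s0 > 0" unfolding s0_def using \<epsilon> by (simp add: add_nonneg_pos)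
    show "\<forall>s. \<bar>s\<bar> < s0 \<longrightarrow> s * bil zo w + s^2 * dz w \<le> 0"
    proof (intro allI impI)
      fix s :: real assume s: "\<bar>s\<bar> < s0"
      define z where "z = zo + s *\<^sub>R w"
      have "dist z zo = \<bar>s\<bar> * norm w" unfolding z_def by (simp add: dist_norm)
      also have "\<dots> \<le> \<bar>s\<bar> * (norm w + 1)" by (simp add: mult_left_mono)
      also have "\<dots> < \<epsilon>"
      proof -
        have "\<bar>s\<bar> * (norm w + 1) < s0 * (norm w + 1)" using s by (intro mult_strict_right_mono) (auto simp: add_nonneg_pos)
        also have "s0 * (norm w + 1) = \<epsilon>" unfolding s0_def
          using add_nonneg_pos[of "norm w" 1] by simp
        finally show ?thesis .
      qed
      finally have dz_: "dist z zo < \<epsilon>" .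
      have "Aall z" unfolding Aall_def z_def
        using vw unfolding V0_def by (simp add: lp_lin)
      then have "PF z" using nbhd dz_ by blast
      have "dz z \<le> dz zo"
      proof (cases "dz z = 0")
        case True then show ?thesis using dzo by simp
      next
        case False
        then have "\<bar>dz z\<bar> \<le> dz zo" using opt \<open>PF z\<close> unfolding PF_def by blast
        then show ?thesis by simp
      qed
      then show "s * bil zo w + s^2 * dz w \<le> 0" unfolding z_def dz_expand by simp
    qed
  qed
  define Vq where "Vq = {w. (\<forall>i<4. tox w i \<in> \<rat>) \<and> V0 w}"
  define E2 where "E2 = EA \<union> eqB ` Vq"
  have ratE2: "\<forall>e\<in>E2. ratE 4 e" unfolding E2_def Vq_def using ratEA ratE_eqB by auto
  have solE2: "\<forall>e\<in>E2. sat 4 e (tox zo)"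
  proof
    fix e assume "e \<in> E2"
    then consider "e \<in> EA" | w where "w \<in> Vq" "e = eqB w" unfolding E2_def by blast
    then show "sat 4 e (tox zo)"
    proof cases
      case 1
      have "Aall (ofx (tox zo))" unfolding Aall_def by simp
      then show ?thesis using satEA 1 by blast
    next
      case 2
      then show ?thesis using crit unfolding Vq_def by (simp add: sat_eqB)
    qed
  qed
  have e4: "\<epsilon> / 4 > 0" using \<epsilon> by simp
  obtain x where x: "\<forall>i<4. x i \<in> \<rat>" "\<forall>e\<in>E2. sat 4 e x" "\<forall>i<4. \<bar>x i - tox zo i\<bar> < \<epsilon> / 4"
    using spec[OF spec[OF spec[OF rat_dense[of 4], of E2], of "tox zo"], of "\<epsilon> / 4"] ratE2 solE2 e4 by blast
  define zr where "zr = ofx x"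
  have Azr: "Aall zr" using x(2) satEA unfolding zr_def E2_def by blast
  have "dist zr zo \<le> \<bar>x 0 - tox zo 0\<bar> + \<bar>x 1 - tox zo 1\<bar> + \<bar>x 2 - tox zo 2\<bar> + \<bar>x 3 - tox zo 3\<bar>"
    unfolding zr_def dist_norm by (rule norm_ofx_le)
  also have "\<dots> < \<epsilon> / 4 + \<epsilon> / 4 + \<epsilon> / 4 + \<epsilon> / 4"
    using x(3)[rule_format, of 0] x(3)[rule_format, of 1] x(3)[rule_format, of 2] x(3)[rule_format, of 3]
    by (intro add_strict_mono) auto
  finally have dzr: "dist zr zo < \<epsilon>" by simp
  have PFr: "PF zr" using nbhd dzr Azr by blast
  define wd where "wd = zr - zo"
  have Vwd: "V0 wd" using Azr unfolding V0_def Aall_def wd_def by (auto simp: lp_minus)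
  have b0: "bil zo wd = 0" using crit Vwd by blast
  have bq: "bil wd w' = 0" if "w' \<in> Vq" for w'
  proof -
    have "eqB w' \<in> E2" using that unfolding E2_def by blast
    then have "bil zr w' = 0" using x(2) sat_eqB unfolding zr_def by blast
    moreover have "bil zo w' = 0" using crit that unfolding Vq_def by blast
    ultimately show ?thesis unfolding wd_def bil_diff1 by simp
  qed
  have bww: "bil wd wd = 0"
  proof (rule ccontr)
    assume nz: "bil wd wd \<noteq> 0"
    define M where "M = \<bar>tox wd 0\<bar> + \<bar>tox wd 1\<bar> + \<bar>tox wd 2\<bar> + \<bar>tox wd 3\<bar>"
    define \<eta> where "\<eta> = \<bar>bil wd wd\<bar> / (M + 1)"
    have M0: "M \<ge> 0" unfolding M_def by simp
    have \<eta>0: "\<eta> > 0" unfolding \<eta>_def using nz M0 by (simp add: add_nonneg_pos)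
    have solw: "\<forall>e\<in>E0. sat 4 e (tox wd)" using satE0 Vwd by simp
    obtain x' where x': "\<forall>i<4. x' i \<in> \<rat>" "\<forall>e\<in>E0. sat 4 e x'" "\<forall>i<4. \<bar>x' i - tox wd i\<bar> < \<eta>"
      using spec[OF spec[OF spec[OF rat_dense[of 4], of E0], of "tox wd"], of \<eta>] ratE0 solw \<eta>0 by blast
    define w' where "w' = ofx x'"
    have "w' \<in> Vq" unfolding Vq_def w'_def using x'(1,2) satE0 tox_ofx by simp
    then have bw': "bil wd w' = 0" by (rule bq)
    have small: "\<forall>i<4. \<bar>tox (wd - w') i\<bar> < \<eta>"
    proof (intro allI impI)
      fix i :: nat assume i: "i < 4"
      have "tox (wd - w') i = tox wd i - tox w' i" by (simp add: tox_def)
      moreover have "tox w' i = x' i" using tox_ofx[OF i, of x'] unfolding w'_def .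
      ultimately have "tox (wd - w') i = tox wd i - x' i" by simp
      then show "\<bar>tox (wd - w') i\<bar> < \<eta>" using x'(3) i by (simp add: abs_minus_commute)
    qed
    have "\<bar>bil wd (wd - w')\<bar> \<le> M * \<eta>" using bil_bound[OF small, of wd] unfolding M_def by simp
    also have "\<dots> < \<bar>bil wd wd\<bar>"
    proof -
      have "M * \<eta> = \<bar>bil wd wd\<bar> * (M / (M + 1))" unfolding \<eta>_def by (simp add: field_simps)
      also have "\<dots> < \<bar>bil wd wd\<bar> * 1" using nz M0 by (intro mult_strict_left_mono) auto
      finally show ?thesis by simp
    qed
    finally show False using bw' unfolding bil_diff2 by simp
  qed
  have "dz zr = dz (zo + 1 *\<^sub>R wd)" unfolding wd_def by simp
  also have "\<dots> = dz zo + bil zo wd + dz wd" unfolding dz_expand by simp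
  also have "\<dots> = dz zo" using b0 bww bil_self[of wd] by simp
  finally have "dz zr = dz zo" .
  moreover have "fst (fst zr) \<in> \<rat>" "snd (fst zr) \<in> \<rat>" "fst (snd zr) \<in> \<rat>" "snd (snd zr) \<in> \<rat>"
    using x(1)[rule_format, of 0] x(1)[rule_format, of 1] x(1)[rule_format, of 2] x(1)[rule_format, of 3]
    unfolding zr_def ofx_def by auto
  ultimately show ?thesis using PFr unfolding PF_def by blast
qed



theorem corollary1:
  fixes F :: "(real \<times> real) set set"
  assumes "finite F" and "F \<noteq> {}"
    and "\<forall>R\<in>F. rational_rectangle R"
  shows "\<exists>u v. lin_indep2 u v \<and> piercing F (lattice u v)
           \<and> (\<forall>u' v'. lin_indep2 u' v' \<and> piercing F (lattice u' v')
                  \<longrightarrow> lattice_density u v \<le> lattice_density u' v')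
           \<and> (\<exists>b1 b2. lin_indep2 b1 b2 \<and> lattice b1 b2 = lattice u v
                  \<and> fst b1 \<in> \<rat> \<and> snd b1 \<in> \<rat> \<and> fst b2 \<in> \<rat> \<and> snd b2 \<in> \<rat>)"
proof -
  have "\<forall>R\<in>F. \<exists>pq::pt\<times>pt. R = cbox (fst pq) (snd pq) \<and> fst (fst pq) < fst (snd pq) \<and> snd (fst pq) < snd (snd pq)
       \<and> fst (snd pq) - fst (fst pq) \<in> \<rat> \<and> snd (snd pq) - snd (fst pq) \<in> \<rat>"
  proof
    fix R assume "R \<in> F"
    then obtain p q where pq: "R = cbox p q" "fst p < fst q" "snd p < snd q" "fst q - fst p \<in> \<rat>" "snd q - snd p \<in> \<rat>"
      using assms(3) unfolding rational_rectangle_def by blast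
    show "\<exists>pq::pt\<times>pt. R = cbox (fst pq) (snd pq) \<and> fst (fst pq) < fst (snd pq) \<and> snd (fst pq) < snd (snd pq)
       \<and> fst (snd pq) - fst (fst pq) \<in> \<rat> \<and> snd (snd pq) - snd (fst pq) \<in> \<rat>"
      using pq by (intro exI[of _ "(p, q)"]) simp
  qed
  from bchoice[OF this] obtain PQ where PQ: "\<forall>R\<in>F. R = cbox (fst (PQ R)) (snd (PQ R)) \<and> fst (fst (PQ R)) < fst (snd (PQ R))
       \<and> snd (fst (PQ R)) < snd (snd (PQ R))
       \<and> fst (snd (PQ R)) - fst (fst (PQ R)) \<in> \<rat> \<and> snd (snd (PQ R)) - snd (fst (PQ R)) \<in> \<rat>"
    by blast
  define wid where "wid R = fst (snd (PQ R)) - fst (fst (PQ R))" for R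
  define hei where "hei R = snd (snd (PQ R)) - snd (fst (PQ R))" for R
  have pos: "\<forall>R\<in>F. wid R > 0 \<and> hei R > 0 \<and> wid R \<in> \<rat> \<and> hei R \<in> \<rat>"
    using PQ unfolding wid_def hei_def by auto
  have pier1: "(\<forall>t. \<exists>y\<in>P. y \<in> (\<lambda>x. t + x) ` R) \<longleftrightarrow> pbox (wid R) (hei R) P" if "R \<in> F" for R P
  proof -
    have "R = cbox (fst (PQ R)) (snd (PQ R))" using PQ that by blast
    from piercing_box[OF this, of P] show ?thesis unfolding wid_def hei_def .
  qed
  have pier: "piercing F P \<longleftrightarrow> (\<forall>R\<in>F. pbox (wid R) (hei R) P)" for P
    unfolding piercing_def using pier1 by (intro ball_cong) auto
  obtain zo where zo: "dz zo > 0" "\<forall>R\<in>F. pbox (wid R) (hei R) (LL zo)"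
    "\<forall>z. dz z \<noteq> 0 \<and> (\<forall>R\<in>F. pbox (wid R) (hei R) (LL z)) \<longrightarrow> \<bar>dz z\<bar> \<le> dz zo"
    using opt_exists[OF assms(1,2), of wid hei] pos by blast
  obtain zr where zr: "dz zr = dz zo" "\<forall>R\<in>F. pbox (wid R) (hei R) (LL zr)"
    "fst (fst zr) \<in> \<rat>" "snd (fst zr) \<in> \<rat>" "fst (snd zr) \<in> \<rat>" "snd (snd zr) \<in> \<rat>"
    using rational_opt[OF assms(1) pos zo] by blast
  have li: "lin_indep2 (fst zr) (snd zr)" using zr(1) zo(1) unfolding lin_indep2_def dz_def by simp
  have pz: "piercing F (lattice (fst zr) (snd zr))" using zr(2) pier by blast
  have optd: "lattice_density (fst zr) (snd zr) \<le> lattice_density u' v'"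
    if "lin_indep2 u' v' \<and> piercing F (lattice u' v')" for u' v'
  proof -
    have "dz (u', v') \<noteq> 0" "\<forall>R\<in>F. pbox (wid R) (hei R) (LL (u', v'))"
      using that pier unfolding lin_indep2_def dz_def by auto
    then have "\<bar>dz (u', v')\<bar> \<le> dz zo" using zo(3) by blast
    then have le: "\<bar>det2 u' v'\<bar> \<le> \<bar>det2 (fst zr) (snd zr)\<bar>"
      using zr(1) zo(1) unfolding dz_def by simp
    have "\<bar>det2 u' v'\<bar> > 0" using that unfolding lin_indep2_def by simp
    then show ?thesis unfolding lattice_density_def using le
      by (intro divide_left_mono) (auto intro: mult_pos_pos)
  qed
  show ?thesis
    using li pz optd zr(3-6) by (intro exI[of _ "fst zr"] exI[of _ "snd zr"]) blast
qed


end
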